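(* Let $\mathbf r(x,y)$ be the middle surface of a membrane O surface with constant purely normal load $q_n\neq 0$ (setting and notation as in the context), and suppose it is of the 2nd kind, i.e. the curvature line coordinates $(x,y)$ are such that $$2\overline{A}_1 H_\circ - q_n A_1^2 = -q_n,\qquad 2\overline{A}_2 K_\circ - q_n A_2^2 = -q_n$$ (the normalization $f(x)=g(y)=q_n$). Then the first and third fundamental forms are represented as $$\mathrm{I} = (\cos\alpha + h\sin\alpha)^2\,dx^2 + (\sin\alpha - h\cos\alpha)^2\,dy^2,\qquad \mathrm{III} = e^{2\xi}(\sin^2\alpha\,dx^2 + \cos^2\alpha\,dy^2),$$ where the functions $h,\alpha,\xi$ of $(x,y)$ satisfy the system $$h_x = (h+\cot\alpha)\,\xi_x,\qquad h_y = (h-\tan\alpha)\,\xi_y,$$ $$\xi_{xy} = \xi_x\xi_y + (\log\sin\alpha)_y\,\xi_x + (\log\cos\alpha)_x\,\xi_y,$$ $$(-\alpha_x + \xi_x\cot\alpha)_x + (\alpha_y + \xi_y\tan\alpha)_y + e^{2\xi}\sin\alpha\cos\alpha = 0.$$ Furthermore, the stress resultants are given by $$T_1 = \frac{q_n e^{-\xi}}{2}\,\frac{2h\sin\alpha + (1-h^2)\cos\alpha}{\sin\alpha - h\cos\alpha},\qquad T_2 = \frac{q_n e^{-\xi}}{2}\,\frac{2h\cos\alpha - (1-h^2)\sin\alpha}{\cos\alpha + h\sin\alpha}.$$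
   Context: Let $\mathbf r(x,y)$ be a smooth surface in $\mathbb R^3$ parametrized by curvature line coordinates $(x,y)$, normalized so that $\mathbf r_x = A_1\mathbf X$, $\mathbf r_y = A_2\mathbf Y$ with $\mathbf X,\mathbf Y$ orthonormal. Let $\mathbf N = \mathbf X\times\mathbf Y$, let $\kappa_1,\kappa_2$ be the principal curvatures along the $x$- and $y$-lines, and set $H_\circ = -\kappa_1 A_1$, $K_\circ = -\kappa_2 A_2$, so that $\mathbf N_x = H_\circ\mathbf X$, $\mathbf N_y = K_\circ\mathbf Y$; the first fundamental form is $\mathrm I = A_1^2dx^2 + A_2^2dy^2$ and the third is $\mathrm{III} = H_\circ^2dx^2 + K_\circ^2dy^2$. Put $p=(A_1)_y/A_2$, $q = (A_2)_x/A_1$; the Gauss–Mainardi–Codazzi equations are $(H_\circ)_y = pK_\circ$, $(K_\circ)_x = qH_\circ$, $p_y+q_x+H_\circ K_\circ = 0$. The surface is the middle surface of a shell membrane on which a constant purely normal load $q_n\neq0$ (per unit area) acts, with principal stress lines coinciding with principal curvature lines; the in-plane normal stress resultants $T_1,T_2$ satisfy the equilibrium equations $(T_1)_x + (\log A_1)_x(T_1-T_2)=0$, $(T_2)_y + (\log A_2)_y(T_2-T_1)=0$, $\kappa_1T_1+\kappa_2T_2+q_n=0$. Such a configuration is called a membrane O surface. Set $\overline A_1 = T_2A_1$, $\overline A_2 = T_1A_2$. Then $f := q_nA_1^2 - 2\overline A_1H_\circ$ depends only on $x$ and $g := q_nA_2^2 - 2\overline A_2K_\circ$ depends only on $y$.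 The membrane O surface is said to be of the 1st kind if the curvature line coordinates can be chosen so that $f=-g=q_n$, and of the 2nd kind if they can be chosen so that $f=g=q_n$. *)

theory Defs
  imports "HOL-Analysis.Analysis"
begin

definition dx :: "(real \<times> real \<Rightarrow> 'a::real_normed_vector) \<Rightarrow> real \<times> real \<Rightarrow> 'a" where
  "dx f p = vector_derivative (\<lambda>t. f (t, snd p)) (at (fst p))"

definition dy :: "(real \<times> real \<Rightarrow> 'a::real_normed_vector) \<Rightarrow> real \<times> real \<Rightarrow> 'a" where
  "dy f p = vector_derivative (\<lambda>t. f (fst p, t)) (at (snd p))"

fun pderivs :: "bool list \<Rightarrow> (real \<times> real \<Rightarrow> 'a::real_normed_vector) \<Rightarrow> real \<times> real \<Rightarrow> 'a" where
  "pderivs [] f = f"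
| "pderivs (b # bs) f = (if b then dx else dy) (pderivs bs f)"

definition smooth_on :: "(real \<times> real) set \<Rightarrow> (real \<times> real \<Rightarrow> 'a::real_normed_vector) \<Rightarrow> bool" where
  "smooth_on U f \<longleftrightarrow> (\<forall>bs. pderivs bs f differentiable_on U)"

end

theory Submission
  imports Defs
begin

lemma open_line_x: "open (U::(real\<times>real) set) \<Longrightarrow> open {t. (t, y) \<in> U}"
proof -
  assume "open U"
  have "{t. (t, y) \<in> U} = (\<lambda>t. (t, y)) -` U" by auto
  thus ?thesis using continuous_open_vimage[OF \<open>open U\<close>, of "\<lambda>t. (t, y)"]
    by (simp add: continuous_Pair)
qed

lemma open_line_y: "open (U::(real\<times>real) set) \<Longrightarrow> open {t. (x, t) \<in> U}"
proof -
  assume "open U"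
  have "{t. (x, t) \<in> U} = (\<lambda>t. (x, t)) -` U" by auto
  thus ?thesis using continuous_open_vimage[OF \<open>open U\<close>, of "\<lambda>t. (x, t)"]
    by (simp add: continuous_Pair)
qed

lemma dx_line_deriv:
  assumes "open U" "p \<in> U" "f differentiable_on U"
  shows "((\<lambda>t. f (t, snd p)) has_vector_derivative dx f p) (at (fst p))"
proof -
  have "f differentiable at p" using assms differentiable_on_eq_differentiable_at by blast
  hence "f differentiable at ((\<lambda>t. (t, snd p)) (fst p))" by simp
  moreover have "(\<lambda>t. (t, snd p)) differentiable at (fst p)"
    unfolding differentiable_def by (auto intro!: derivative_eq_intros)
  ultimately have "(f \<circ> (\<lambda>t. (t, snd p))) differentiable at (fst p)"
    using differentiable_chain_at by blast
  thus ?thesis unfolding dx_def by (simp add: o_def vector_derivative_works)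
qed

lemma dy_line_deriv:
  assumes "open U" "p \<in> U" "f differentiable_on U"
  shows "((\<lambda>t. f (fst p, t)) has_vector_derivative dy f p) (at (snd p))"
proof -
  have "f differentiable at p" using assms differentiable_on_eq_differentiable_at by blast
  hence "f differentiable at ((\<lambda>t. (fst p, t)) (snd p))" by simp
  moreover have "(\<lambda>t. (fst p, t)) differentiable at (snd p)"
    unfolding differentiable_def by (auto intro!: derivative_eq_intros)
  ultimately have "(f \<circ> (\<lambda>t. (fst p, t))) differentiable at (snd p)"
    using differentiable_chain_at by blast
  thus ?thesis unfolding dy_def by (simp add: o_def vector_derivative_works)
qed

lemma dx_real:
  fixes f :: "real \<times> real \<Rightarrow> real"
  assumes "open U" "p \<in> U" "f differentiable_on U"
  shows "((\<lambda>t. f (t, snd p)) has_real_derivative dx f p) (at (fst p))"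
  using dx_line_deriv[OF assms] by (simp add: has_real_derivative_iff_has_vector_derivative)

lemma dy_real:
  fixes f :: "real \<times> real \<Rightarrow> real"
  assumes "open U" "p \<in> U" "f differentiable_on U"
  shows "((\<lambda>t. f (fst p, t)) has_real_derivative dy f p) (at (snd p))"
  using dy_line_deriv[OF assms] by (simp add: has_real_derivative_iff_has_vector_derivative)

lemma dx_eq: "((\<lambda>t. f (t, snd p)) has_vector_derivative D) (at (fst p)) \<Longrightarrow> dx f p = D"
  unfolding dx_def by (rule vector_derivative_at)

lemma dy_eq: "((\<lambda>t. f (fst p, t)) has_vector_derivative D) (at (snd p)) \<Longrightarrow> dy f p = D"
  unfolding dy_def by (rule vector_derivative_at)

lemma dx_eq_real: "((\<lambda>t. f (t, snd p)) has_real_derivative D) (at (fst p)) \<Longrightarrow> dx f p = (D::real)"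
  by (rule dx_eq) (simp add: has_real_derivative_iff_has_vector_derivative)

lemma dy_eq_real: "((\<lambda>t. f (fst p, t)) has_real_derivative D) (at (snd p)) \<Longrightarrow> dy f p = (D::real)"
  by (rule dy_eq) (simp add: has_real_derivative_iff_has_vector_derivative)

lemma vd_cong_open:
  assumes "open S" "x \<in> S" "\<And>t. t \<in> S \<Longrightarrow> f t = g t"
  shows "vector_derivative f (at x) = vector_derivative g (at x)"
proof -
  have "\<And>D. (f has_vector_derivative D) (at x) \<longleftrightarrow> (g has_vector_derivative D) (at x)"
  proof
    fix D assume "(f has_vector_derivative D) (at x)"
    thus "(g has_vector_derivative D) (at x)"
      by (rule has_vector_derivative_transform_within_open[OF _ assms(1,2)]) (simp add: assms(3))
  next
    fix D assume "(g has_vector_derivative D) (at x)"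
    thus "(f has_vector_derivative D) (at x)"
      by (rule has_vector_derivative_transform_within_open[OF _ assms(1,2)]) (simp add: assms(3))
  qed
  thus ?thesis unfolding vector_derivative_def by simp
qed

lemma dx_cong:
  assumes "open U" "p \<in> U" "\<And>q. q \<in> U \<Longrightarrow> f q = g q"
  shows "dx f p = dx g p"
  unfolding dx_def
  by (rule vd_cong_open[OF open_line_x[OF assms(1)]]) (use assms in auto)

lemma dy_cong:
  assumes "open U" "p \<in> U" "\<And>q. q \<in> U \<Longrightarrow> f q = g q"
  shows "dy f p = dy g p"
  unfolding dy_def
  by (rule vd_cong_open[OF open_line_y[OF assms(1)]]) (use assms in auto)

lemma differentiable_on_cong_open:
  assumes "open U" "\<And>q. q \<in> U \<Longrightarrow> f q = g q" "f differentiable_on U"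
  shows "g differentiable_on U"
  unfolding differentiable_on_eq_differentiable_at[OF assms(1)]
proof
  fix x assume x: "x \<in> U"
  then obtain D where "(f has_derivative D) (at x)"
    using assms(3) differentiable_on_eq_differentiable_at[OF assms(1)] differentiable_def by blast
  hence "(g has_derivative D) (at x)"
    using has_derivative_transform_within_open[OF _ assms(1) x] assms(2) by blast
  thus "g differentiable at x" unfolding differentiable_def by blast
qed

definition sm :: "nat \<Rightarrow> (real \<times> real) set \<Rightarrow> (real \<times> real \<Rightarrow> 'a::real_normed_vector) \<Rightarrow> bool" where
  "sm n U f \<longleftrightarrow> (\<forall>bs. length bs \<le> n \<longrightarrow> pderivs bs f differentiable_on U)"

lemma pderivs_snoc: "pderivs (bs @ [b]) f = pderivs bs ((if b then dx else dy) f)"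
  by (induction bs) auto

lemma smooth_on_sm: "smooth_on U f \<longleftrightarrow> (\<forall>n. sm n U f)"
  unfolding smooth_on_def sm_def by auto

lemma sm_0: "sm 0 U f \<longleftrightarrow> f differentiable_on U"
  unfolding sm_def by auto

lemma sm_Suc: "sm (Suc n) U f \<longleftrightarrow> f differentiable_on U \<and> sm n U (dx f) \<and> sm n U (dy f)"
proof
  assume a: "sm (Suc n) U f"
  have "f differentiable_on U" using a[unfolded sm_def, rule_format, of "[]"] by simp
  moreover have "sm n U (dx f)"
    unfolding sm_def proof (intro allI impI)
    fix bs :: "bool list" assume "length bs \<le> n"
    thus "pderivs bs (dx f) differentiable_on U"
      using a[unfolded sm_def, rule_format, of "bs @ [True]"] by (simp add: pderivs_snoc)
  qed
  moreover have "sm n U (dy f)"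
    unfolding sm_def proof (intro allI impI)
    fix bs :: "bool list" assume "length bs \<le> n"
    thus "pderivs bs (dy f) differentiable_on U"
      using a[unfolded sm_def, rule_format, of "bs @ [False]"] by (simp add: pderivs_snoc)
  qed
  ultimately show "f differentiable_on U \<and> sm n U (dx f) \<and> sm n U (dy f)" by blast
next
  assume a: "f differentiable_on U \<and> sm n U (dx f) \<and> sm n U (dy f)"
  show "sm (Suc n) U f"
    unfolding sm_def proof (intro allI impI)
    fix bs :: "bool list" assume l: "length bs \<le> Suc n"
    show "pderivs bs f differentiable_on U"
    proof (cases bs rule: rev_exhaust)
      case Nil thus ?thesis using a by simp
    next
      case (snoc cs b)
      hence "length cs \<le> n" using l by simp
      thus ?thesis using a snoc unfolding sm_def by (cases b) (auto simp: pderivs_snoc)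
    qed
  qed
qed

lemma sm_mono: "sm (Suc n) U f \<Longrightarrow> sm n U f"
  unfolding sm_def by auto

lemma sm_le: "sm n U f \<Longrightarrow> m \<le> n \<Longrightarrow> sm m U f"
  unfolding sm_def by auto

lemma smooth_sm: "smooth_on U f \<Longrightarrow> sm n U f"
  by (simp add: smooth_on_sm)

lemma sm_cong:
  assumes "open U" "\<And>q. q \<in> U \<Longrightarrow> f q = g q" "sm n U f"
  shows "sm n U g"
  using assms(2,3)
proof (induction n arbitrary: f g)
  case 0 thus ?case using differentiable_on_cong_open[OF assms(1), of f g] by (simp add: sm_0)
next
  case (Suc n)
  have "\<And>q. q \<in> U \<Longrightarrow> dx f q = dx g q" using dx_cong[OF assms(1)] Suc.prems(1) by blast
  moreover have "\<And>q. q \<in> U \<Longrightarrow> dy f q = dy g q" using dy_cong[OF assms(1)] Suc.prems(1) by blast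
  ultimately show ?case using Suc differentiable_on_cong_open[OF assms(1)] by (simp add: sm_Suc) blast
qed

lemma smooth_cong:
  assumes "open U" "\<And>q. q \<in> U \<Longrightarrow> f q = g q" "smooth_on U f"
  shows "smooth_on U g"
  using sm_cong[OF assms(1,2)] assms(3) by (simp add: smooth_on_sm)

lemma smooth_dx: "smooth_on U f \<Longrightarrow> smooth_on U (dx f)"
  by (meson sm_Suc smooth_on_sm)

lemma smooth_dy: "smooth_on U f \<Longrightarrow> smooth_on U (dy f)"
  by (meson sm_Suc smooth_on_sm)

lemma smooth_diff: "smooth_on U f \<Longrightarrow> f differentiable_on U"
  by (meson sm_0 smooth_on_sm)

lemma dx_const: "dx (\<lambda>q. c) p = 0"
  by (rule dx_eq) simp

lemma dy_const: "dy (\<lambda>q. c) p = 0"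
  by (rule dy_eq) simp

lemma sm_const: "sm n U (\<lambda>q. c)"
proof (induction n arbitrary: c)
  case 0 thus ?case by (simp add: sm_0)
next
  case (Suc n)
  have "dx (\<lambda>q. c) = (\<lambda>q. 0)" "dy (\<lambda>q. c) = (\<lambda>q. 0)" by (auto simp: dx_const dy_const)
  thus ?case using Suc by (simp add: sm_Suc)
qed

lemma dx_add:
  assumes "open U" "p \<in> U" "f differentiable_on U" "g differentiable_on U"
  shows "dx (\<lambda>q. f q + g q) p = dx f p + dx g p"
  by (rule dx_eq) (intro has_vector_derivative_add dx_line_deriv[OF assms(1,2)] assms(3,4))

lemma dy_add:
  assumes "open U" "p \<in> U" "f differentiable_on U" "g differentiable_on U"
  shows "dy (\<lambda>q. f q + g q) p = dy f p + dy g p"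
  by (rule dy_eq) (intro has_vector_derivative_add dy_line_deriv[OF assms(1,2)] assms(3,4))

lemma sm_add:
  assumes "open U"
  shows "sm n U f \<Longrightarrow> sm n U g \<Longrightarrow> sm n U (\<lambda>q. f q + g q)"
proof (induction n arbitrary: f g)
  case 0 thus ?case by (simp add: sm_0 differentiable_on_add)
next
  case (Suc n)
  have df: "f differentiable_on U" "g differentiable_on U" using Suc.prems by (auto simp: sm_Suc)
  have "sm n U (\<lambda>q. dx f q + dx g q)" "sm n U (\<lambda>q. dy f q + dy g q)"
    using Suc by (auto simp: sm_Suc)
  hence "sm n U (dx (\<lambda>q. f q + g q))" "sm n U (dy (\<lambda>q. f q + g q))"
    using sm_cong[OF assms] dx_add[OF assms _ df] dy_add[OF assms _ df] by (metis (no_types, lifting))+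
  thus ?case using df by (simp add: sm_Suc differentiable_on_add)
qed

lemma bb_differentiable_on:
  fixes prod :: "'a::real_normed_vector \<Rightarrow> 'b::real_normed_vector \<Rightarrow> 'c::real_normed_vector"
    and f :: "real \<times> real \<Rightarrow> 'a" and g :: "real \<times> real \<Rightarrow> 'b" and U :: "(real \<times> real) set"
  assumes "bounded_bilinear prod" "open U" "f differentiable_on U" "g differentiable_on U"
  shows "(\<lambda>q. prod (f q) (g q)) differentiable_on U"
  unfolding differentiable_on_eq_differentiable_at[OF assms(2)]
proof
  fix x assume "x \<in> U"
  then obtain F G where "(f has_derivative F) (at x)" "(g has_derivative G) (at x)"
    using assms(3,4) differentiable_on_eq_differentiable_at[OF assms(2)] differentiable_def by metis
  from bounded_bilinear.FDERIV[OF assms(1) this]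
  show "(\<lambda>q. prod (f q) (g q)) differentiable at x" unfolding differentiable_def by blast
qed

lemma dx_bb:
  fixes prod :: "'a::real_normed_vector \<Rightarrow> 'b::real_normed_vector \<Rightarrow> 'c::real_normed_vector"
    and f :: "real \<times> real \<Rightarrow> 'a" and g :: "real \<times> real \<Rightarrow> 'b" and U :: "(real \<times> real) set"
  assumes "bounded_bilinear prod" "open U" "p \<in> U" "f differentiable_on U" "g differentiable_on U"
  shows "dx (\<lambda>q. prod (f q) (g q)) p = prod (f p) (dx g p) + prod (dx f p) (g p)"
proof (rule dx_eq)
  have "((\<lambda>t. prod (f (t, snd p)) (g (t, snd p))) has_vector_derivative
     prod (f ((\<lambda>t. (t, snd p)) (fst p))) (dx g p) + prod (dx f p) (g ((\<lambda>t. (t, snd p)) (fst p)))) (at (fst p))"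
    by (rule bounded_bilinear.has_vector_derivative[OF assms(1)]) (intro dx_line_deriv[OF assms(2,3)] assms(4,5))+
  thus "((\<lambda>t. prod (f (t, snd p)) (g (t, snd p))) has_vector_derivative prod (f p) (dx g p) + prod (dx f p) (g p)) (at (fst p))"
    by simp
qed

lemma dy_bb:
  fixes prod :: "'a::real_normed_vector \<Rightarrow> 'b::real_normed_vector \<Rightarrow> 'c::real_normed_vector"
    and f :: "real \<times> real \<Rightarrow> 'a" and g :: "real \<times> real \<Rightarrow> 'b" and U :: "(real \<times> real) set"
  assumes "bounded_bilinear prod" "open U" "p \<in> U" "f differentiable_on U" "g differentiable_on U"
  shows "dy (\<lambda>q. prod (f q) (g q)) p = prod (f p) (dy g p) + prod (dy f p) (g p)"
proof (rule dy_eq)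
  have "((\<lambda>t. prod (f (fst p, t)) (g (fst p, t))) has_vector_derivative
     prod (f ((\<lambda>t. (fst p, t)) (snd p))) (dy g p) + prod (dy f p) (g ((\<lambda>t. (fst p, t)) (snd p)))) (at (snd p))"
    by (rule bounded_bilinear.has_vector_derivative[OF assms(1)]) (intro dy_line_deriv[OF assms(2,3)] assms(4,5))+
  thus "((\<lambda>t. prod (f (fst p, t)) (g (fst p, t))) has_vector_derivative prod (f p) (dy g p) + prod (dy f p) (g p)) (at (snd p))"
    by simp
qed

lemma sm_bb:
  fixes prod :: "'a::real_normed_vector \<Rightarrow> 'b::real_normed_vector \<Rightarrow> 'c::real_normed_vector"
    and f :: "real \<times> real \<Rightarrow> 'a" and g :: "real \<times> real \<Rightarrow> 'b" and U :: "(real \<times> real) set"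
  assumes "bounded_bilinear prod" "open U"
  shows "sm n U f \<Longrightarrow> sm n U g \<Longrightarrow> sm n U (\<lambda>q. prod (f q) (g q))"
proof (induction n arbitrary: f g)
  case 0 thus ?case using bb_differentiable_on[OF assms] by (simp add: sm_0)
next
  case (Suc n)
  have df: "f differentiable_on U" "g differentiable_on U" using Suc.prems by (auto simp: sm_Suc)
  have sn: "sm n U f" "sm n U g" using Suc.prems sm_mono by auto
  have "sm n U (\<lambda>q. prod (f q) (dx g q) + prod (dx f q) (g q))"
    using Suc sn by (intro sm_add[OF assms(2)]) (auto simp: sm_Suc)
  hence 1: "sm n U (dx (\<lambda>q. prod (f q) (g q)))"
    using sm_cong[OF assms(2)] dx_bb[OF assms _ df] by (metis (no_types, lifting))
  have "sm n U (\<lambda>q. prod (f q) (dy g q) + prod (dy f q) (g q))"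
    using Suc sn by (intro sm_add[OF assms(2)]) (auto simp: sm_Suc)
  hence 2: "sm n U (dy (\<lambda>q. prod (f q) (g q)))"
    using sm_cong[OF assms(2)] dy_bb[OF assms _ df] by (metis (no_types, lifting))
  show ?case using 1 2 bb_differentiable_on[OF assms df] by (simp add: sm_Suc)
qed

lemma smooth_bb:
  fixes prod :: "'a::real_normed_vector \<Rightarrow> 'b::real_normed_vector \<Rightarrow> 'c::real_normed_vector"
    and f :: "real \<times> real \<Rightarrow> 'a" and g :: "real \<times> real \<Rightarrow> 'b" and U :: "(real \<times> real) set"
  assumes "bounded_bilinear prod" "open U" "smooth_on U f" "smooth_on U g"
  shows "smooth_on U (\<lambda>q. prod (f q) (g q))"
  using sm_bb[OF assms(1,2)] assms(3,4) by (simp add: smooth_on_sm)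

lemma comp_differentiable_on:
  fixes f :: "real \<times> real \<Rightarrow> real"
  assumes "open U" "f differentiable_on U" "\<And>q. q \<in> U \<Longrightarrow> (\<phi> has_real_derivative \<phi>' (f q)) (at (f q))"
  shows "(\<lambda>q. \<phi> (f q)) differentiable_on U"
  unfolding differentiable_on_eq_differentiable_at[OF assms(1)]
proof
  fix x assume x: "x \<in> U"
  have "f differentiable at x" using assms(2) x differentiable_on_eq_differentiable_at[OF assms(1)] by blast
  moreover have "\<phi> differentiable at (f x)"
    using assms(3)[OF x] has_field_derivative_imp_has_derivative differentiable_def by blast
  ultimately have "(\<phi> \<circ> f) differentiable at x" by (rule differentiable_chain_at)
  thus "(\<lambda>q. \<phi> (f q)) differentiable at x" by (simp add: o_def)
qed

lemma dx_comp:
  fixes f :: "real \<times> real \<Rightarrow> real"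
  assumes "open U" "p \<in> U" "f differentiable_on U" "(\<phi> has_real_derivative D) (at (f p))"
  shows "dx (\<lambda>q. \<phi> (f q)) p = D * dx f p"
proof (rule dx_eq_real)
  show "((\<lambda>t. \<phi> (f (t, snd p))) has_real_derivative D * dx f p) (at (fst p))"
    using DERIV_chain2[where f=\<phi> and g="\<lambda>t. f (t, snd p)" and x="fst p" and Da=D] dx_real[OF assms(1-3)] assms(4) by simp
qed

lemma dy_comp:
  fixes f :: "real \<times> real \<Rightarrow> real"
  assumes "open U" "p \<in> U" "f differentiable_on U" "(\<phi> has_real_derivative D) (at (f p))"
  shows "dy (\<lambda>q. \<phi> (f q)) p = D * dy f p"
proof (rule dy_eq_real)
  show "((\<lambda>t. \<phi> (f (fst p, t))) has_real_derivative D * dy f p) (at (snd p))"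
    using DERIV_chain2[where f=\<phi> and g="\<lambda>t. f (fst p, t)" and x="snd p" and Da=D] dy_real[OF assms(1-3)] assms(4) by simp
qed

lemma sm_comp_step:
  fixes f :: "real \<times> real \<Rightarrow> real"
  assumes "open U" "\<And>q. q \<in> U \<Longrightarrow> (\<phi> has_real_derivative \<phi>' (f q)) (at (f q))"
    and "sm (Suc n) U f" "sm n U (\<lambda>q. \<phi>' (f q))"
  shows "sm (Suc n) U (\<lambda>q. \<phi> (f q))"
proof -
  have df: "f differentiable_on U" using assms(3) by (simp add: sm_Suc)
  have s: "sm n U (dx f)" "sm n U (dy f)" using assms(3) by (auto simp: sm_Suc)
  have "sm n U (\<lambda>q. \<phi>' (f q) * dx f q)" "sm n U (\<lambda>q. \<phi>' (f q) * dy f q)"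
    using sm_bb[OF bounded_bilinear_mult assms(1)] assms(4) s by auto
  hence "sm n U (dx (\<lambda>q. \<phi> (f q)))" "sm n U (dy (\<lambda>q. \<phi> (f q)))"
    using sm_cong[OF assms(1)] dx_comp[OF assms(1) _ df assms(2)] dy_comp[OF assms(1) _ df assms(2)]
    by (metis (no_types, lifting))+
  thus ?thesis using comp_differentiable_on[OF assms(1) df assms(2)] by (simp add: sm_Suc)
qed

lemma sm_comp_0:
  fixes f :: "real \<times> real \<Rightarrow> real"
  assumes "open U" "\<And>q. q \<in> U \<Longrightarrow> (\<phi> has_real_derivative \<phi>' (f q)) (at (f q))"
    and "sm 0 U f"
  shows "sm 0 U (\<lambda>q. \<phi> (f q))"
  using comp_differentiable_on[where \<phi>'=\<phi>', OF assms(1) _ assms(2)] assms(3) by (simp add: sm_0)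

lemma sm_exp:
  fixes f :: "real \<times> real \<Rightarrow> real"
  assumes "open U"
  shows "sm n U f \<Longrightarrow> sm n U (\<lambda>q. exp (f q))"
proof (induction n)
  case 0 thus ?case by (intro sm_comp_0[where \<phi>=exp and \<phi>'=exp, OF assms]) (auto intro: DERIV_exp)
next
  case (Suc n)
  thus ?case using sm_mono by (intro sm_comp_step[where \<phi>=exp and \<phi>'=exp, OF assms]) (auto intro: DERIV_exp)
qed

lemma sm_inverse:
  fixes f :: "real \<times> real \<Rightarrow> real"
  assumes "open U" "\<And>q. q \<in> U \<Longrightarrow> f q \<noteq> 0"
  shows "sm n U f \<Longrightarrow> sm n U (\<lambda>q. inverse (f q))"
proof -
  have D: "\<And>q. q \<in> U \<Longrightarrow> (inverse has_real_derivative (\<lambda>x. (-1) * (inverse x * inverse x)) (f q)) (at (f q))"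
    using assms(2) by (auto intro!: derivative_eq_intros simp: field_simps power2_eq_square)
  show "sm n U f \<Longrightarrow> sm n U (\<lambda>q. inverse (f q))"
  proof (induction n)
    case 0 thus ?case using sm_comp_0[where \<phi>=inverse and \<phi>'="\<lambda>x. (-1) * (inverse x * inverse x)", OF assms(1) D] by simp
  next
    case (Suc n)
    have i: "sm n U (\<lambda>q. inverse (f q))" using Suc sm_mono by blast
    have "sm n U (\<lambda>q. inverse (f q) * inverse (f q))" using sm_bb[OF bounded_bilinear_mult assms(1) i i] by simp
    hence "sm n U (\<lambda>q. (-1) * (inverse (f q) * inverse (f q)))"
      by (rule sm_bb[OF bounded_bilinear_mult assms(1) sm_const])
    thus ?case by (intro sm_comp_step[where \<phi>=inverse and \<phi>'="\<lambda>x. (-1) * (inverse x * inverse x)", OF assms(1) D] Suc.prems) simp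
  qed
qed

lemma sm_ln:
  fixes f :: "real \<times> real \<Rightarrow> real"
  assumes "open U" "\<And>q. q \<in> U \<Longrightarrow> f q > 0" "sm n U f"
  shows "sm n U (\<lambda>q. ln (f q))"
proof -
  have D: "\<And>q. q \<in> U \<Longrightarrow> (ln has_real_derivative inverse (f q)) (at (f q))"
    using assms(2) by (auto intro!: derivative_eq_intros simp: inverse_eq_divide)
  show ?thesis
  proof (cases n)
    case 0 thus ?thesis using sm_comp_0[where \<phi>=ln and \<phi>'=inverse, OF assms(1) D] assms(3) by simp
  next
    case (Suc m)
    have nz: "\<And>q. q \<in> U \<Longrightarrow> f q \<noteq> 0" using assms(2) by (metis less_irrefl)
    have "sm m U f" using assms(3) Suc sm_mono by simp
    note sm_inverse[OF assms(1) nz this]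
    hence "sm m U (\<lambda>q. inverse (f q))" by simp
    thus ?thesis using sm_comp_step[where \<phi>=ln and \<phi>'=inverse, OF assms(1) D] assms(3) Suc by simp
  qed
qed

lemma sm_arctan:
  fixes f :: "real \<times> real \<Rightarrow> real"
  assumes "open U" "sm n U f"
  shows "sm n U (\<lambda>q. arctan (f q))"
proof -
  have D: "\<And>q. q \<in> U \<Longrightarrow> (arctan has_real_derivative (\<lambda>x. inverse (1 + x * x)) (f q)) (at (f q))"
    by (auto intro!: derivative_eq_intros simp: power2_eq_square)
  show ?thesis
  proof (cases n)
    case 0 thus ?thesis using sm_comp_0[where \<phi>=arctan and \<phi>'="\<lambda>x. inverse (1 + x * x)", OF assms(1) D] assms(2) by simp
  next
    case (Suc m)
    have "sm m U f" using assms Suc sm_mono by simp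
    hence "sm m U (\<lambda>q. 1 + f q * f q)"
      by (intro sm_add[OF assms(1)] sm_const sm_bb[OF bounded_bilinear_mult assms(1)])
    hence "sm m U (\<lambda>q. inverse (1 + f q * f q))"
      by (rule sm_inverse[OF assms(1), rotated]) (smt (verit, best) zero_le_square)
    thus ?thesis using sm_comp_step[where \<phi>=arctan and \<phi>'="\<lambda>x. inverse (1 + x * x)", OF assms(1) D] assms(2) Suc by simp
  qed
qed

lemma smooth_exp: "open U \<Longrightarrow> smooth_on U f \<Longrightarrow> smooth_on U (\<lambda>q. exp (f q :: real))"
  by (simp add: smooth_on_sm sm_exp)
lemma smooth_inverse: "open U \<Longrightarrow> (\<And>q. q \<in> U \<Longrightarrow> f q \<noteq> 0) \<Longrightarrow> smooth_on U f \<Longrightarrow> smooth_on U (\<lambda>q. inverse (f q :: real))"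
  unfolding smooth_on_sm proof
  fix n assume a: "open U" "\<And>q. q \<in> U \<Longrightarrow> f q \<noteq> 0" "\<forall>n. sm n U f"
  note sm_inverse[OF a(1,2) a(3)[rule_format, of n]]
  thus "sm n U (\<lambda>q. inverse (f q))" by simp
qed
lemma smooth_ln: "open U \<Longrightarrow> (\<And>q. q \<in> U \<Longrightarrow> f q > 0) \<Longrightarrow> smooth_on U f \<Longrightarrow> smooth_on U (\<lambda>q. ln (f q :: real))"
  unfolding smooth_on_sm proof
  fix n assume a: "open U" "\<And>q. q \<in> U \<Longrightarrow> f q > 0" "\<forall>n. sm n U f"
  note sm_ln[OF a(1,2) a(3)[rule_format, of n]]
  thus "sm n U (\<lambda>q. ln (f q))" by simp
qed
lemma smooth_arctan: "open U \<Longrightarrow> smooth_on U f \<Longrightarrow> smooth_on U (\<lambda>q. arctan (f q :: real))"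
  by (simp add: smooth_on_sm sm_arctan)
lemma smooth_const: "smooth_on U (\<lambda>q. c)"
  by (simp add: smooth_on_sm sm_const)
lemma smooth_add: "open U \<Longrightarrow> smooth_on U f \<Longrightarrow> smooth_on U g \<Longrightarrow> smooth_on U (\<lambda>q. f q + g q)"
  by (simp add: smooth_on_sm sm_add)
lemma smooth_mult: "open U \<Longrightarrow> smooth_on U f \<Longrightarrow> smooth_on U g \<Longrightarrow> smooth_on U (\<lambda>q. f q * g q :: real)"
  by (rule smooth_bb[OF bounded_bilinear_mult])
lemma smooth_minus: "open U \<Longrightarrow> smooth_on U f \<Longrightarrow> smooth_on U (\<lambda>q. - f q :: real)"
  using smooth_mult[of U "\<lambda>q. -1" f] smooth_const[of U "-1::real"] by simp
lemma smooth_diffr: "open U \<Longrightarrow> smooth_on U f \<Longrightarrow> smooth_on U g \<Longrightarrow> smooth_on U (\<lambda>q. f q - g q :: real)"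
  using smooth_add[OF _ _ smooth_minus, of U f g] by simp
lemma smooth_divide: "open U \<Longrightarrow> (\<And>q. q \<in> U \<Longrightarrow> g q \<noteq> 0) \<Longrightarrow> smooth_on U f \<Longrightarrow> smooth_on U g \<Longrightarrow> smooth_on U (\<lambda>q. f q / g q :: real)"
  using smooth_mult[OF _ _ smooth_inverse, of U f g] by (simp add: divide_inverse)
lemma smooth_inner: "open U \<Longrightarrow> smooth_on U f \<Longrightarrow> smooth_on U g \<Longrightarrow> smooth_on U (\<lambda>q. f q \<bullet> g q :: real)"
  for f g :: "real \<times> real \<Rightarrow> 'a::real_inner"
  by (rule smooth_bb[OF bounded_bilinear_inner])

lemma bounded_bilinear_cross3: "bounded_bilinear cross3"
  using bilinear_conv_bounded_bilinear[of cross3] bilinear_cross by simp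

lemma smooth_cross: "open U \<Longrightarrow> smooth_on U f \<Longrightarrow> smooth_on U g \<Longrightarrow> smooth_on U (\<lambda>q. cross3 (f q) (g q))"
  by (rule smooth_bb[OF bounded_bilinear_cross3])

lemma box_dist:
  fixes a b u v t :: real
  assumes "\<bar>u - a\<bar> \<le> t" "\<bar>v - b\<bar> \<le> t" "t > 0"
  shows "dist (a, b) (u, v) < 2 * t"
proof -
  have "(dist a u)\<^sup>2 + (dist b v)\<^sup>2 \<le> t\<^sup>2 + t\<^sup>2"
    using assms by (intro add_mono power_mono) (auto simp: dist_real_def abs_minus_commute)
  also have "\<dots> < (2 * t)\<^sup>2" using assms(3) by (simp add: power2_eq_square)
  finally have h: "(dist a u)\<^sup>2 + (dist b v)\<^sup>2 < (2 * t)\<^sup>2" .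
  have "sqrt ((dist a u)\<^sup>2 + (dist b v)\<^sup>2) < sqrt ((2 * t)\<^sup>2)" using real_sqrt_less_mono[OF h] .
  moreover have "sqrt ((2 * t)\<^sup>2) = \<bar>2 * t\<bar>" by (rule real_sqrt_abs)
  moreover have "\<bar>2 * t\<bar> = 2 * t" using assms(3) by simp
  ultimately have "sqrt ((dist a u)\<^sup>2 + (dist b v)\<^sup>2) < 2 * t" by linarith
  thus ?thesis by (simp only: dist_Pair_Pair)
qed

lemma schwarz_key:
  fixes f :: "real \<times> real \<Rightarrow> real"
  assumes U: "open U" and sm: "smooth_on U f"
    and t: "t > 0" and box: "\<And>u v. a \<le> u \<Longrightarrow> u \<le> a + t \<Longrightarrow> b \<le> v \<Longrightarrow> v \<le> b + t \<Longrightarrow> (u, v) \<in> U"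
  shows "\<exists>z1 w1 z2 w2. a \<le> z1 \<and> z1 \<le> a + t \<and> b \<le> w1 \<and> w1 \<le> b + t \<and>
           a \<le> z2 \<and> z2 \<le> a + t \<and> b \<le> w2 \<and> w2 \<le> b + t \<and>
           dy (dx f) (z1, w1) = dx (dy f) (z2, w2)"
proof -
  have df: "f differentiable_on U" by (rule smooth_diff[OF sm])
  have dxf: "dx f differentiable_on U" by (rule smooth_diff[OF smooth_dx[OF sm]])
  have dyf: "dy f differentiable_on U" by (rule smooth_diff[OF smooth_dy[OF sm]])
  define \<Delta> where "\<Delta> = f (a + t, b + t) - f (a + t, b) - f (a, b + t) + f (a, b)"
  have "\<exists>z. a < z \<and> z < a + t \<and>
      (\<lambda>u. f (u, b + t) - f (u, b)) (a + t) - (\<lambda>u. f (u, b + t) - f (u, b)) a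
      = (a + t - a) * (dx f (z, b + t) - dx f (z, b))"
  proof (rule MVT2)
    fix u assume "a \<le> u" "u \<le> a + t"
    hence m: "(u, b + t) \<in> U" "(u, b) \<in> U" using box t by auto
    show "((\<lambda>u. f (u, b + t) - f (u, b)) has_real_derivative dx f (u, b + t) - dx f (u, b)) (at u)"
      using dx_real[OF U m(1) df] dx_real[OF U m(2) df] by (auto intro!: derivative_intros)
  qed (use t in simp)
  then obtain z1 where z1: "a < z1" "z1 < a + t" "\<Delta> = t * (dx f (z1, b + t) - dx f (z1, b))"
    unfolding \<Delta>_def by auto
  have "\<exists>w. b < w \<and> w < b + t \<and> dx f (z1, b + t) - dx f (z1, b) = (b + t - b) * dy (dx f) (z1, w)"
  proof (rule MVT2)
    fix v assume "b \<le> v" "v \<le> b + t"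
    hence m: "(z1, v) \<in> U" using box z1 by auto
    show "((\<lambda>v. dx f (z1, v)) has_real_derivative dy (dx f) (z1, v)) (at v)"
      using dy_real[OF U m dxf] by simp
  qed (use t in simp)
  then obtain w1 where w1: "b < w1" "w1 < b + t" "\<Delta> = t * t * dy (dx f) (z1, w1)"
    using z1 by auto
  have "\<exists>w. b < w \<and> w < b + t \<and>
      (\<lambda>v. f (a + t, v) - f (a, v)) (b + t) - (\<lambda>v. f (a + t, v) - f (a, v)) b
      = (b + t - b) * (dy f (a + t, w) - dy f (a, w))"
  proof (rule MVT2)
    fix v assume "b \<le> v" "v \<le> b + t"
    hence m: "(a + t, v) \<in> U" "(a, v) \<in> U" using box t by auto
    show "((\<lambda>v. f (a + t, v) - f (a, v)) has_real_derivative dy f (a + t, v) - dy f (a, v)) (at v)"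
      using dy_real[OF U m(1) df] dy_real[OF U m(2) df] by (auto intro!: derivative_intros)
  qed (use t in simp)
  then obtain w2 where w2: "b < w2" "w2 < b + t" "\<Delta> = t * (dy f (a + t, w2) - dy f (a, w2))"
    unfolding \<Delta>_def by (auto simp: algebra_simps)
  have "\<exists>z. a < z \<and> z < a + t \<and> dy f (a + t, w2) - dy f (a, w2) = (a + t - a) * dx (dy f) (z, w2)"
  proof (rule MVT2)
    fix u assume "a \<le> u" "u \<le> a + t"
    hence m: "(u, w2) \<in> U" using box w2 by auto
    show "((\<lambda>u. dy f (u, w2)) has_real_derivative dx (dy f) (u, w2)) (at u)"
      using dx_real[OF U m dyf] by simp
  qed (use t in simp)
  then obtain z2 where z2: "a < z2" "z2 < a + t" "\<Delta> = t * t * dx (dy f) (z2, w2)"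
    using w2 by auto
  have "dy (dx f) (z1, w1) = dx (dy f) (z2, w2)" using w1(3) z2(3) t by simp
  thus ?thesis using z1 w1 z2 w2 by (intro exI[of _ z1] exI[of _ w1] exI[of _ z2] exI[of _ w2]) auto
qed

lemma schwarz_real:
  fixes f :: "real \<times> real \<Rightarrow> real"
  assumes U: "open U" and p: "p \<in> U" and sm: "smooth_on U f"
  shows "dy (dx f) p = dx (dy f) p"
proof (rule ccontr)
  assume ne: "dy (dx f) p \<noteq> dx (dy f) p"
  define e where "e = \<bar>dy (dx f) p - dx (dy f) p\<bar> / 2"
  have e: "e > 0" using ne by (simp add: e_def)
  have c1: "continuous_on U (dy (dx f))"
    by (rule differentiable_imp_continuous_on, rule smooth_diff, rule smooth_dy, rule smooth_dx, rule sm)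
  have c2: "continuous_on U (dx (dy f))"
    by (rule differentiable_imp_continuous_on, rule smooth_diff, rule smooth_dx, rule smooth_dy, rule sm)
  have i1: "isCont (dy (dx f)) p" and i2: "isCont (dx (dy f)) p"
    using c1 c2 p continuous_on_eq_continuous_at[OF U] by auto
  obtain d1 where d1: "d1 > 0" "\<And>x. dist x p < d1 \<Longrightarrow> dist (dy (dx f) x) (dy (dx f) p) < e"
    using i1[unfolded continuous_at_eps_delta, rule_format, OF e] by blast
  obtain d2 where d2: "d2 > 0" "\<And>x. dist x p < d2 \<Longrightarrow> dist (dx (dy f) x) (dx (dy f) p) < e"
    using i2[unfolded continuous_at_eps_delta, rule_format, OF e] by blast
  obtain d where d: "d > 0" "ball p d \<subseteq> U" using U p open_contains_ball by blast
  define t where "t = min d (min d1 d2) / 4"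
  have t: "t > 0" "2 * t < d" "2 * t < d1" "2 * t < d2" using d(1) d1(1) d2(1) unfolding t_def by linarith+
  obtain a b where ab: "p = (a, b)" by (cases p)
  have close: "dist (u, v) p < 2 * t" if "a \<le> u" "u \<le> a + t" "b \<le> v" "v \<le> b + t" for u v
    using box_dist[of u a t v b] that t ab by (simp add: dist_commute)
  have "\<And>u v. a \<le> u \<Longrightarrow> u \<le> a + t \<Longrightarrow> b \<le> v \<Longrightarrow> v \<le> b + t \<Longrightarrow> (u, v) \<in> U"
  proof -
    fix u v assume uv: "a \<le> u" "u \<le> a + t" "b \<le> v" "v \<le> b + t"
    have "dist p (u, v) < 2 * t" using close[OF uv] by (simp add: dist_commute)
    hence "dist p (u, v) < d" using t by linarith
    thus "(u, v) \<in> U" using d by auto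
  qed
  from schwarz_key[OF U sm t(1) this] obtain z1 w1 z2 w2 where
    z: "a \<le> z1" "z1 \<le> a + t" "b \<le> w1" "w1 \<le> b + t" "a \<le> z2" "z2 \<le> a + t" "b \<le> w2" "w2 \<le> b + t"
    and eq: "dy (dx f) (z1, w1) = dx (dy f) (z2, w2)" by blast
  have "dist (dy (dx f) (z1, w1)) (dy (dx f) p) < e" using d1(2) close[OF z(1-4)] t by simp
  moreover have "dist (dx (dy f) (z2, w2)) (dx (dy f) p) < e" using d2(2) close[OF z(5-8)] t by simp
  ultimately have "\<bar>dy (dx f) p - dx (dy f) p\<bar> < 2 * e" using eq by (simp add: dist_real_def)
  thus False by (simp add: e_def)
qed

lemma schwarz_vec:
  fixes F :: "real \<times> real \<Rightarrow> 'a::real_inner"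
  assumes U: "open U" and p: "p \<in> U" and sm: "smooth_on U F"
  shows "dy (dx F) p = dx (dy F) p"
proof -
  have key: "dy (dx F) p \<bullet> v = dx (dy F) p \<bullet> v" for v
  proof -
    let ?f = "\<lambda>q. F q \<bullet> v"
    have sf: "smooth_on U ?f" by (rule smooth_inner[OF U sm smooth_const])
    have dF: "\<And>G q. q \<in> U \<Longrightarrow> G differentiable_on U \<Longrightarrow> dx (\<lambda>q. G q \<bullet> v) q = dx G q \<bullet> v"
      using dx_bb[OF bounded_bilinear_inner U, where g="\<lambda>q. v"] differentiable_on_const
      by (simp add: dx_const)
    have dG: "\<And>G q. q \<in> U \<Longrightarrow> G differentiable_on U \<Longrightarrow> dy (\<lambda>q. G q \<bullet> v) q = dy G q \<bullet> v"
      using dy_bb[OF bounded_bilinear_inner U, where g="\<lambda>q. v"] differentiable_on_const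
      by (simp add: dy_const)
    have diffF: "F differentiable_on U" "dx F differentiable_on U" "dy F differentiable_on U"
      using smooth_diff smooth_dx smooth_dy sm by blast+
    have "dy (dx ?f) p = dy (\<lambda>q. dx F q \<bullet> v) p"
      by (rule dy_cong[OF U p]) (rule dF[OF _ diffF(1)])
    also have "\<dots> = dy (dx F) p \<bullet> v" by (rule dG[OF p diffF(2)])
    finally have 1: "dy (dx ?f) p = dy (dx F) p \<bullet> v" .
    have "dx (dy ?f) p = dx (\<lambda>q. dy F q \<bullet> v) p"
      by (rule dx_cong[OF U p]) (rule dG[OF _ diffF(1)])
    also have "\<dots> = dx (dy F) p \<bullet> v" by (rule dF[OF p diffF(3)])
    finally have 2: "dx (dy ?f) p = dx (dy F) p \<bullet> v" .
    show ?thesis using schwarz_real[OF U p sf] 1 2 by simp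
  qed
  have "(dy (dx F) p - dx (dy F) p) \<bullet> (dy (dx F) p - dx (dy F) p) = 0"
    using key by (simp add: inner_diff_left)
  thus ?thesis by simp
qed

lemma triple_cross: "cross3 (cross3 a b) c = (a \<bullet> c) *\<^sub>R b - (b \<bullet> c) *\<^sub>R a"
  by (simp add: cross3_simps forall_3)

lemma frame_decomp:
  fixes X Y u :: "real^3"
  assumes "norm X = 1" "norm Y = 1" "X \<bullet> Y = 0"
  shows "u = (u \<bullet> X) *\<^sub>R X + (u \<bullet> Y) *\<^sub>R Y + (u \<bullet> cross3 X Y) *\<^sub>R cross3 X Y"
proof -
  let ?N = "cross3 X Y"
  have XX: "X \<bullet> X = 1" "Y \<bullet> Y = 1" using assms by (simp_all add: dot_square_norm)
  have "(norm ?N)\<^sup>2 = 1" using norm_cross_dot[of X Y] assms by simp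
  hence nN: "norm ?N = 1" by (smt (verit) norm_ge_zero power2_eq_1_iff)
  hence NN: "?N \<bullet> ?N = 1" by (simp add: dot_square_norm)
  have NX: "?N \<bullet> X = 0" "?N \<bullet> Y = 0" using dot_cross_self by (auto simp: inner_commute)
  define w where "w = u - ((u \<bullet> X) *\<^sub>R X + (u \<bullet> Y) *\<^sub>R Y + (u \<bullet> ?N) *\<^sub>R ?N)"
  have wX: "w \<bullet> X = 0" "w \<bullet> Y = 0" "w \<bullet> ?N = 0"
    unfolding w_def using XX NN NX assms(3)
    by (simp_all add: inner_diff_left inner_add_left inner_diff_right inner_add_right inner_commute)
  have "cross3 ?N w = 0" using wX by (simp add: triple_cross inner_commute)
  hence "(norm w)\<^sup>2 = 0" using norm_cross_dot[of ?N w] nN wX by (simp add: inner_commute)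
  hence "w = 0" by simp
  thus ?thesis unfolding w_def by simp
qed

lemma parseval3:
  fixes X Y u v :: "real^3"
  assumes "norm X = 1" "norm Y = 1" "X \<bullet> Y = 0"
  shows "u \<bullet> v = (u \<bullet> X) * (v \<bullet> X) + (u \<bullet> Y) * (v \<bullet> Y) + (u \<bullet> cross3 X Y) * (v \<bullet> cross3 X Y)"
proof -
  have "u \<bullet> v = ((u \<bullet> X) *\<^sub>R X + (u \<bullet> Y) *\<^sub>R Y + (u \<bullet> cross3 X Y) *\<^sub>R cross3 X Y) \<bullet> v"
    using frame_decomp[OF assms] by metis
  thus ?thesis by (simp add: inner_add_left inner_add_right inner_commute mult.commute)
qed

lemma dx_inner:
  fixes F G :: "real \<times> real \<Rightarrow> 'a::real_inner"
  assumes "open U" "p \<in> U" "F differentiable_on U" "G differentiable_on U"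
  shows "dx (\<lambda>q. F q \<bullet> G q) p = F p \<bullet> dx G p + dx F p \<bullet> G p"
  by (rule dx_bb[OF bounded_bilinear_inner assms])

lemma dy_inner:
  fixes F G :: "real \<times> real \<Rightarrow> 'a::real_inner"
  assumes "open U" "p \<in> U" "F differentiable_on U" "G differentiable_on U"
  shows "dy (\<lambda>q. F q \<bullet> G q) p = F p \<bullet> dy G p + dy F p \<bullet> G p"
  by (rule dy_bb[OF bounded_bilinear_inner assms])

lemma dx_scaleR:
  fixes a :: "real \<times> real \<Rightarrow> real" and F :: "real \<times> real \<Rightarrow> 'a::real_normed_vector"
  assumes "open U" "p \<in> U" "a differentiable_on U" "F differentiable_on U"
  shows "dx (\<lambda>q. a q *\<^sub>R F q) p = a p *\<^sub>R dx F p + dx a p *\<^sub>R F p"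
  by (rule dx_bb[OF bounded_bilinear_scaleR assms])

lemma dy_scaleR:
  fixes a :: "real \<times> real \<Rightarrow> real" and F :: "real \<times> real \<Rightarrow> 'a::real_normed_vector"
  assumes "open U" "p \<in> U" "a differentiable_on U" "F differentiable_on U"
  shows "dy (\<lambda>q. a q *\<^sub>R F q) p = a p *\<^sub>R dy F p + dy a p *\<^sub>R F p"
  by (rule dy_bb[OF bounded_bilinear_scaleR assms])

lemma dx_locconst:
  assumes "open U" "p \<in> U" "\<And>q. q \<in> U \<Longrightarrow> f q = c"
  shows "dx f p = 0"
  using dx_cong[OF assms(1,2), of f "\<lambda>q. c"] assms(3) dx_const by metis

lemma dy_locconst:
  assumes "open U" "p \<in> U" "\<And>q. q \<in> U \<Longrightarrow> f q = c"
  shows "dy f p = 0"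
  using dy_cong[OF assms(1,2), of f "\<lambda>q. c"] assms(3) dy_const by metis

lemma geometry:
  fixes U :: "(real \<times> real) set"
    and r X Y :: "real \<times> real \<Rightarrow> real^3"
    and A1 A2 Hc Kc :: "real \<times> real \<Rightarrow> real"
  assumes U: "open U"
    and sr: "smooth_on U r" and sX: "smooth_on U X" and sY: "smooth_on U Y"
    and sA1: "smooth_on U A1" and sA2: "smooth_on U A2"
    and A_nz: "\<forall>p\<in>U. A1 p \<noteq> 0 \<and> A2 p \<noteq> 0"
    and frame: "\<forall>p\<in>U. norm (X p) = 1 \<and> norm (Y p) = 1 \<and> X p \<bullet> Y p = 0"
    and r_x: "\<forall>p\<in>U. dx r p = A1 p *\<^sub>R X p"
    and r_y: "\<forall>p\<in>U. dy r p = A2 p *\<^sub>R Y p"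
    and N_x: "\<forall>p\<in>U. dx (\<lambda>q. cross3 (X q) (Y q)) p = Hc p *\<^sub>R X p"
    and N_y: "\<forall>p\<in>U. dy (\<lambda>q. cross3 (X q) (Y q)) p = Kc p *\<^sub>R Y p"
  shows "smooth_on U Hc" "smooth_on U Kc"
    "\<forall>p\<in>U. dy Hc p = dy A1 p / A2 p * Kc p"
    "\<forall>p\<in>U. dx Kc p = dx A2 p / A1 p * Hc p"
    "\<forall>p\<in>U. dy (\<lambda>q. dy A1 q / A2 q) p + dx (\<lambda>q. dx A2 q / A1 q) p + Hc p * Kc p = 0"
proof -
  define N where "N = (\<lambda>q. cross3 (X q) (Y q))"
  have sN: "smooth_on U N" unfolding N_def by (rule smooth_cross[OF U sX sY])
  have XX: "\<And>q. q \<in> U \<Longrightarrow> X q \<bullet> X q = 1" "\<And>q. q \<in> U \<Longrightarrow> Y q \<bullet> Y q = 1"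
    "\<And>q. q \<in> U \<Longrightarrow> X q \<bullet> Y q = 0"
    using frame by (auto simp: dot_square_norm)
  have NX: "\<And>q. N q \<bullet> X q = 0" "\<And>q. N q \<bullet> Y q = 0"
    unfolding N_def using dot_cross_self by (auto simp: inner_commute)
  have Hc_eq: "\<And>q. q \<in> U \<Longrightarrow> Hc q = dx N q \<bullet> X q"
    using N_x XX unfolding N_def by simp
  have Kc_eq: "\<And>q. q \<in> U \<Longrightarrow> Kc q = dy N q \<bullet> Y q"
    using N_y XX unfolding N_def by simp
  have sHc: "smooth_on U Hc"
    by (rule smooth_cong[OF U, of "\<lambda>q. dx N q \<bullet> X q"]) (simp_all add: Hc_eq smooth_inner[OF U smooth_dx[OF sN] sX])
  have sKc: "smooth_on U Kc"
    by (rule smooth_cong[OF U, of "\<lambda>q. dy N q \<bullet> Y q"]) (simp_all add: Kc_eq smooth_inner[OF U smooth_dy[OF sN] sY])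
  show "smooth_on U Hc" "smooth_on U Kc" by (rule sHc, rule sKc)
  have dX: "X differentiable_on U" "dx X differentiable_on U" "dy X differentiable_on U"
    using sX smooth_diff smooth_dx smooth_dy by blast+
  have dY: "Y differentiable_on U" "dx Y differentiable_on U" "dy Y differentiable_on U"
    using sY smooth_diff smooth_dx smooth_dy by blast+
  have dN: "N differentiable_on U" "dx N differentiable_on U" "dy N differentiable_on U"
    using sN smooth_diff smooth_dx smooth_dy by blast+
  have dA: "A1 differentiable_on U" "A2 differentiable_on U" "Hc differentiable_on U" "Kc differentiable_on U"
    using sA1 sA2 sHc sKc smooth_diff by blast+
  have dA': "dx A2 differentiable_on U" "dy A1 differentiable_on U"
    using sA1 sA2 smooth_diff smooth_dx smooth_dy by blast+
  have XXx: "dx X p \<bullet> X p = 0" "dy X p \<bullet> X p = 0" "dx Y p \<bullet> Y p = 0" "dy Y p \<bullet> Y p = 0"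
    if p: "p \<in> U" for p
  proof -
    have "dx (\<lambda>q. X q \<bullet> X q) p = 0" by (rule dx_locconst[OF U p XX(1)])
    thus "dx X p \<bullet> X p = 0" using dx_inner[OF U p dX(1) dX(1)] by (simp add: inner_commute)
    have "dy (\<lambda>q. X q \<bullet> X q) p = 0" by (rule dy_locconst[OF U p XX(1)])
    thus "dy X p \<bullet> X p = 0" using dy_inner[OF U p dX(1) dX(1)] by (simp add: inner_commute)
    have "dx (\<lambda>q. Y q \<bullet> Y q) p = 0" by (rule dx_locconst[OF U p XX(2)])
    thus "dx Y p \<bullet> Y p = 0" using dx_inner[OF U p dY(1) dY(1)] by (simp add: inner_commute)
    have "dy (\<lambda>q. Y q \<bullet> Y q) p = 0" by (rule dy_locconst[OF U p XX(2)])
    thus "dy Y p \<bullet> Y p = 0" using dy_inner[OF U p dY(1) dY(1)] by (simp add: inner_commute)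
  qed
  have XYx: "X p \<bullet> dx Y p + dx X p \<bullet> Y p = 0" "X p \<bullet> dy Y p + dy X p \<bullet> Y p = 0"
    if p: "p \<in> U" for p
  proof -
    have "dx (\<lambda>q. X q \<bullet> Y q) p = 0" by (rule dx_locconst[OF U p XX(3)])
    thus "X p \<bullet> dx Y p + dx X p \<bullet> Y p = 0" using dx_inner[OF U p dX(1) dY(1)] by simp
    have "dy (\<lambda>q. X q \<bullet> Y q) p = 0" by (rule dy_locconst[OF U p XX(3)])
    thus "X p \<bullet> dy Y p + dy X p \<bullet> Y p = 0" using dy_inner[OF U p dX(1) dY(1)] by simp
  qed
  have NXx: "N p \<bullet> dx X p = - Hc p" "N p \<bullet> dy X p = 0" "N p \<bullet> dx Y p = 0" "N p \<bullet> dy Y p = - Kc p"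
    if p: "p \<in> U" for p
  proof -
    have "dx (\<lambda>q. N q \<bullet> X q) p = 0" by (rule dx_locconst[OF U p NX(1)])
    thus "N p \<bullet> dx X p = - Hc p" using dx_inner[OF U p dN(1) dX(1)] Hc_eq[OF p] by simp
    have "dy (\<lambda>q. N q \<bullet> X q) p = 0" by (rule dy_locconst[OF U p NX(1)])
    thus "N p \<bullet> dy X p = 0" using dy_inner[OF U p dN(1) dX(1)] N_y p XX(3)[OF p] unfolding N_def
      by (simp add: inner_commute)
    have "dx (\<lambda>q. N q \<bullet> Y q) p = 0" by (rule dx_locconst[OF U p NX(2)])
    thus "N p \<bullet> dx Y p = 0" using dx_inner[OF U p dN(1) dY(1)] N_x p XX(3)[OF p] unfolding N_def
      by simp
    have "dy (\<lambda>q. N q \<bullet> Y q) p = 0" by (rule dy_locconst[OF U p NX(2)])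
    thus "N p \<bullet> dy Y p = - Kc p" using dy_inner[OF U p dN(1) dY(1)] Kc_eq[OF p] by simp
  qed
  have PQ: "dy A1 p = A2 p * (dx Y p \<bullet> X p)" "dx A2 p = A1 p * (dy X p \<bullet> Y p)" if p: "p \<in> U" for p
  proof -
    have "dy (dx r) p = dy (\<lambda>q. A1 q *\<^sub>R X q) p" using r_x by (intro dy_cong[OF U p]) auto
    also have "\<dots> = A1 p *\<^sub>R dy X p + dy A1 p *\<^sub>R X p" by (rule dy_scaleR[OF U p dA(1) dX(1)])
    finally have 1: "dy (dx r) p = A1 p *\<^sub>R dy X p + dy A1 p *\<^sub>R X p" .
    have "dx (dy r) p = dx (\<lambda>q. A2 q *\<^sub>R Y q) p" using r_y by (intro dx_cong[OF U p]) auto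
    also have "\<dots> = A2 p *\<^sub>R dx Y p + dx A2 p *\<^sub>R Y p" by (rule dx_scaleR[OF U p dA(2) dY(1)])
    finally have 2: "dx (dy r) p = A2 p *\<^sub>R dx Y p + dx A2 p *\<^sub>R Y p" .
    have e: "A1 p *\<^sub>R dy X p + dy A1 p *\<^sub>R X p = A2 p *\<^sub>R dx Y p + dx A2 p *\<^sub>R Y p"
      using 1 2 schwarz_vec[OF U p sr] by simp
    have "(A1 p *\<^sub>R dy X p + dy A1 p *\<^sub>R X p) \<bullet> X p = (A2 p *\<^sub>R dx Y p + dx A2 p *\<^sub>R Y p) \<bullet> X p"
      using e by simp
    thus "dy A1 p = A2 p * (dx Y p \<bullet> X p)"
      using XXx[OF p] XX[OF p] by (simp add: inner_add_left inner_add_right inner_commute)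
    have "(A1 p *\<^sub>R dy X p + dy A1 p *\<^sub>R X p) \<bullet> Y p = (A2 p *\<^sub>R dx Y p + dx A2 p *\<^sub>R Y p) \<bullet> Y p"
      using e by simp
    thus "dx A2 p = A1 p * (dy X p \<bullet> Y p)"
      using XXx[OF p] XX[OF p] by (simp add: inner_add_left inner_add_right inner_commute)
  qed
  have pf: "\<And>q. q \<in> U \<Longrightarrow> dy A1 q / A2 q = dx Y q \<bullet> X q" using PQ(1) A_nz by simp
  have qf: "\<And>q. q \<in> U \<Longrightarrow> dx A2 q / A1 q = dy X q \<bullet> Y q" using PQ(2) A_nz by simp
  show "\<forall>p\<in>U. dy Hc p = dy A1 p / A2 p * Kc p"
  proof
    fix p assume p: "p \<in> U"
    have "dy Hc p = dy (\<lambda>q. dx N q \<bullet> X q) p" using Hc_eq by (intro dy_cong[OF U p]) auto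
    also have "\<dots> = dx N p \<bullet> dy X p + dy (dx N) p \<bullet> X p" by (rule dy_inner[OF U p dN(2) dX(1)])
    also have "dy (dx N) p = dx (dy N) p" by (rule schwarz_vec[OF U p sN])
    also have "dx (dy N) p = dx (\<lambda>q. Kc q *\<^sub>R Y q) p" using N_y unfolding N_def by (intro dx_cong[OF U p]) auto
    also have "\<dots> = Kc p *\<^sub>R dx Y p + dx Kc p *\<^sub>R Y p" by (rule dx_scaleR[OF U p dA(4) dY(1)])
    finally have "dy Hc p = dx N p \<bullet> dy X p + (Kc p *\<^sub>R dx Y p + dx Kc p *\<^sub>R Y p) \<bullet> X p" .
    moreover have "dx N p = Hc p *\<^sub>R X p" using N_x p unfolding N_def by simp
    ultimately show "dy Hc p = dy A1 p / A2 p * Kc p"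
      using XXx[OF p] XX[OF p] pf[OF p] by (simp add: inner_add_left inner_add_right inner_commute)
  qed
  show "\<forall>p\<in>U. dx Kc p = dx A2 p / A1 p * Hc p"
  proof
    fix p assume p: "p \<in> U"
    have "dx Kc p = dx (\<lambda>q. dy N q \<bullet> Y q) p" using Kc_eq by (intro dx_cong[OF U p]) auto
    also have "\<dots> = dy N p \<bullet> dx Y p + dx (dy N) p \<bullet> Y p" by (rule dx_inner[OF U p dN(3) dY(1)])
    also have "dx (dy N) p = dy (dx N) p" by (rule schwarz_vec[OF U p sN, symmetric])
    also have "dy (dx N) p = dy (\<lambda>q. Hc q *\<^sub>R X q) p" using N_x unfolding N_def by (intro dy_cong[OF U p]) auto
    also have "\<dots> = Hc p *\<^sub>R dy X p + dy Hc p *\<^sub>R X p" by (rule dy_scaleR[OF U p dA(3) dX(1)])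
    finally have "dx Kc p = dy N p \<bullet> dx Y p + (Hc p *\<^sub>R dy X p + dy Hc p *\<^sub>R X p) \<bullet> Y p" .
    moreover have "dy N p = Kc p *\<^sub>R Y p" using N_y p unfolding N_def by simp
    ultimately show "dx Kc p = dx A2 p / A1 p * Hc p"
      using XXx[OF p] XX[OF p] qf[OF p] by (simp add: inner_add_left inner_add_right inner_commute)
  qed
  show "\<forall>p\<in>U. dy (\<lambda>q. dy A1 q / A2 q) p + dx (\<lambda>q. dx A2 q / A1 q) p + Hc p * Kc p = 0"
  proof
    fix p assume p: "p \<in> U"
    have 1: "dy (\<lambda>q. dy A1 q / A2 q) p = dx Y p \<bullet> dy X p + dy (dx Y) p \<bullet> X p"
    proof -
      have "dy (\<lambda>q. dy A1 q / A2 q) p = dy (\<lambda>q. dx Y q \<bullet> X q) p" using pf by (intro dy_cong[OF U p]) auto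
      also have "\<dots> = dx Y p \<bullet> dy X p + dy (dx Y) p \<bullet> X p" by (rule dy_inner[OF U p dY(2) dX(1)])
      finally show ?thesis .
    qed
    have 2: "dx (\<lambda>q. dx A2 q / A1 q) p = dy X p \<bullet> dx Y p + dx (dy X) p \<bullet> Y p"
    proof -
      have "dx (\<lambda>q. dx A2 q / A1 q) p = dx (\<lambda>q. dy X q \<bullet> Y q) p" using qf by (intro dx_cong[OF U p]) auto
      also have "\<dots> = dy X p \<bullet> dx Y p + dx (dy X) p \<bullet> Y p" by (rule dx_inner[OF U p dX(3) dY(1)])
      finally show ?thesis .
    qed
    have 3: "X p \<bullet> dy (dx Y) p + dy X p \<bullet> dx Y p + (dx X p \<bullet> dy Y p + dy (dx X) p \<bullet> Y p) = 0"
    proof -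
      have "dy (\<lambda>q. X q \<bullet> dx Y q + dx X q \<bullet> Y q) p = 0" by (rule dy_locconst[OF U p XYx(1)])
      moreover have "dy (\<lambda>q. X q \<bullet> dx Y q + dx X q \<bullet> Y q) p
          = dy (\<lambda>q. X q \<bullet> dx Y q) p + dy (\<lambda>q. dx X q \<bullet> Y q) p"
        by (rule dy_add[OF U p]) (intro bb_differentiable_on[OF bounded_bilinear_inner U] dX dY)+
      moreover have "dy (\<lambda>q. X q \<bullet> dx Y q) p = X p \<bullet> dy (dx Y) p + dy X p \<bullet> dx Y p"
        by (rule dy_inner[OF U p dX(1) dY(2)])
      moreover have "dy (\<lambda>q. dx X q \<bullet> Y q) p = dx X p \<bullet> dy Y p + dy (dx X) p \<bullet> Y p"
        by (rule dy_inner[OF U p dX(2) dY(1)])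
      ultimately show ?thesis by simp
    qed
    have 4: "dy (dx X) p = dx (dy X) p" by (rule schwarz_vec[OF U p sX])
    have fr: "norm (X p) = 1" "norm (Y p) = 1" "X p \<bullet> Y p = 0" using frame p by auto
    have 5: "dy X p \<bullet> dx Y p = 0"
      using parseval3[OF fr, of "dy X p" "dx Y p"] XXx[OF p] NXx[OF p] unfolding N_def
      by (simp add: inner_commute)
    have 6: "dx X p \<bullet> dy Y p = Hc p * Kc p"
      using parseval3[OF fr, of "dx X p" "dy Y p"] XXx[OF p] NXx[OF p] XYx[OF p] unfolding N_def
      by (simp add: inner_commute)
    show "dy (\<lambda>q. dy A1 q / A2 q) p + dx (\<lambda>q. dx A2 q / A1 q) p + Hc p * Kc p = 0"
      using 1 2 3 4 5 6 by (simp add: inner_commute)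
  qed
qed

lemma key_sq:
  fixes a1 a2 hc kc t1 t2 qn :: real
  assumes nz: "a1 \<noteq> 0" "a2 \<noteq> 0" "qn \<noteq> 0"
    and e3: "(- hc / a1) * t1 + (- kc / a2) * t2 + qn = 0"
    and k1: "2 * (t2 * a1) * hc - qn * a1\<^sup>2 = - qn"
    and k2: "2 * (t1 * a2) * kc - qn * a2\<^sup>2 = - qn"
  shows "(hc * a2 - kc * a1)\<^sup>2 = hc * hc + kc * kc"
proof -
  have m: "- hc * a2 * t1 - kc * a1 * t2 + qn * a1 * a2 = 0"
  proof -
    have "a1 * a2 * ((- hc / a1) * t1 + (- kc / a2) * t2 + qn) = 0" using e3 by simp
    moreover have "a1 * a2 * ((- hc / a1) * t1 + (- kc / a2) * t2 + qn) = - hc * a2 * t1 - kc * a1 * t2 + qn * a1 * a2"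
      using nz by (simp add: field_simps)
    ultimately show ?thesis by linarith
  qed
  have id: "qn * (hc * hc + kc * kc - (hc * a2 - kc * a1)\<^sup>2) =
      2 * hc * kc * (- hc * a2 * t1 - kc * a1 * t2 + qn * a1 * a2)
      + hc * hc * (2 * (t1 * a2) * kc - qn * a2\<^sup>2 + qn)
      + kc * kc * (2 * (t2 * a1) * hc - qn * a1\<^sup>2 + qn)"
    by (simp add: algebra_simps power2_eq_square)
  have "2 * (t1 * a2) * kc - qn * a2\<^sup>2 + qn = 0" "2 * (t2 * a1) * hc - qn * a1\<^sup>2 + qn = 0"
    using k1 k2 by linarith+
  hence "qn * (hc * hc + kc * kc - (hc * a2 - kc * a1)\<^sup>2) = 0" using id m by simp
  thus ?thesis using nz by simp
qed

lemma half_angle: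
  fixes s c :: real
  assumes sc: "s\<^sup>2 + c\<^sup>2 = 1" and c: "1 + c > 0"
  shows "sin (2 * arctan (s / (1 + c))) = s" "cos (2 * arctan (s / (1 + c))) = c"
proof -
  define t where "t = s / (1 + c)"
  have sq: "(sqrt (1 + t\<^sup>2))\<^sup>2 = 1 + t\<^sup>2" by (simp add: add_pos_nonneg)
  have pos: "sqrt (1 + t\<^sup>2) > 0" by (simp add: add_pos_nonneg)
  have one: "1 + t\<^sup>2 = 2 / (1 + c)"
  proof -
    have a: "(1 + c)\<^sup>2 + s\<^sup>2 = 2 * (1 + c)" using sc by (simp add: power2_eq_square algebra_simps)
    have b: "t\<^sup>2 = s\<^sup>2 / (1 + c)\<^sup>2" by (simp add: t_def power_divide)
    have "1 + t\<^sup>2 = ((1 + c)\<^sup>2 + s\<^sup>2) / (1 + c)\<^sup>2" using c b by (simp add: field_simps)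
    also have "\<dots> = 2 * (1 + c) / ((1 + c) * (1 + c))" using a by (simp add: power2_eq_square)
    also have "\<dots> = 2 / (1 + c)" using c by (intro mult_divide_mult_cancel_right) simp
    finally show ?thesis .
  qed
  have ss: "sqrt (1 + t\<^sup>2) * sqrt (1 + t\<^sup>2) = 1 + t\<^sup>2" using sq by (simp add: power2_eq_square)
  have "sin (2 * arctan t) = 2 * sin (arctan t) * cos (arctan t)" by (rule sin_double)
  also have "\<dots> = 2 * t / (sqrt (1 + t\<^sup>2) * sqrt (1 + t\<^sup>2))" by (simp add: sin_arctan cos_arctan)
  also have "\<dots> = 2 * t / (1 + t\<^sup>2)" using ss by simp
  also have "\<dots> = s" using c one unfolding t_def by (simp add: field_simps)
  finally show "sin (2 * arctan (s / (1 + c))) = s" unfolding t_def .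
  have "cos (2 * arctan t) = (cos (arctan t))\<^sup>2 - (sin (arctan t))\<^sup>2" by (rule cos_double)
  also have "\<dots> = 1 / (sqrt (1 + t\<^sup>2) * sqrt (1 + t\<^sup>2)) - t * t / (sqrt (1 + t\<^sup>2) * sqrt (1 + t\<^sup>2))"
    by (simp add: sin_arctan cos_arctan power2_eq_square)
  also have "\<dots> = (1 - t\<^sup>2) / (1 + t\<^sup>2)" using ss by (simp add: diff_divide_distrib power2_eq_square)
  also have "\<dots> = c"
  proof -
    have "t\<^sup>2 = 2 / (1 + c) - 1" using one by simp
    also have "\<dots> = (1 - c) / (1 + c)" using c by (simp add: field_simps)
    finally have t2: "t\<^sup>2 = (1 - c) / (1 + c)" .
    have "(1 - t\<^sup>2) = 2 * c / (1 + c)" "1 + t\<^sup>2 = 2 / (1 + c)" using c t2 one by (simp_all add: field_simps)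
    thus ?thesis using c by simp
  qed
  finally show "cos (2 * arctan (s / (1 + c))) = c" unfolding t_def .
qed

lemma alg_H1:
  fixes \<sigma> e S C h a hx x Q :: real
  assumes nz: "\<sigma> \<noteq> 0" "e \<noteq> 0" "C \<noteq> 0" "S \<noteq> 0" "C + h * S \<noteq> 0"
    and eq: "- (\<sigma> * (e * x * C - e * S * a)) = \<sigma> * (C * a - (hx * C - h * S * a)) / (C + h * S) * (e * S)"
  shows "hx = (h + C / S) * x"
proof -
  have "- (\<sigma> * (e * x * C - e * S * a)) * (C + h * S) = \<sigma> * (C * a - (hx * C - h * S * a)) * (e * S)"
    using eq nz by (simp add: field_simps)
  hence "\<sigma> * e * C * (hx * S - x * (C + h * S)) = 0" by (simp add: algebra_simps)
  hence "hx * S = x * (C + h * S)" using nz by simp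
  thus ?thesis using nz by (simp add: field_simps)
qed

lemma alg_H2:
  fixes \<sigma> e S C h ay hy y :: real
  assumes nz: "\<sigma> \<noteq> 0" "e \<noteq> 0" "C \<noteq> 0" "S \<noteq> 0" "S - h * C \<noteq> 0"
    and eq: "e * y * S + e * C * ay = (- S * ay + hy * S + h * C * ay) / (\<sigma> * (S - h * C)) * (- (\<sigma> * (e * C)))"
  shows "hy = (h - S / C) * y"
proof -
  have "(e * y * S + e * C * ay) * (\<sigma> * (S - h * C)) = (- S * ay + hy * S + h * C * ay) * (- (\<sigma> * (e * C)))"
    using eq nz by (simp add: field_simps)
  hence "\<sigma> * e * S * (C * hy + y * (S - h * C)) = 0" by (simp add: algebra_simps)
  hence "C * hy + y * (S - h * C) = 0" using nz by simp
  hence "C * hy = - y * (S - h * C)" by (simp add: algebra_simps)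
  thus ?thesis using nz by (simp add: field_simps)
qed

lemma alg_B1:
  fixes \<sigma> e S C a x Q :: real
  assumes nz: "\<sigma> * \<sigma> = 1" "e \<noteq> 0" "S \<noteq> 0"
    and eq: "- (\<sigma> * (e * x * C - e * S * a)) = Q * (e * S)"
  shows "- a + x * (C / S) = - \<sigma> * Q"
proof -
  have "e * (- (\<sigma> * (x * C - S * a))) = e * (Q * S)" using eq by (simp add: algebra_simps)
  hence "- (\<sigma> * (x * C - S * a)) = Q * S" using mult_left_cancel[OF nz(2)] by blast
  hence "- ((\<sigma> * \<sigma>) * (x * C - S * a)) = \<sigma> * Q * S" by (metis mult.assoc mult_minus_right)
  hence "- (x * C - S * a) = \<sigma> * Q * S" using nz by simp
  thus ?thesis using nz by (simp add: field_simps)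
qed

lemma alg_B2:
  fixes \<sigma> e S C ay y P :: real
  assumes nz: "e \<noteq> 0" "C \<noteq> 0"
    and eq: "e * y * S + e * C * ay = P * (- (\<sigma> * (e * C)))"
  shows "ay + y * (S / C) = - \<sigma> * P"
proof -
  have "e * (y * S + C * ay) = e * (- (\<sigma> * P * C))" using eq by (simp add: algebra_simps)
  hence "y * S + C * ay = - (\<sigma> * P * C)" using mult_left_cancel[OF nz(1)] by blast
  thus ?thesis using nz by (simp add: field_simps)
qed

lemma alg_xi:
  fixes S C h x y ax ay hx hy Z :: real
  assumes nz: "S \<noteq> 0" "C \<noteq> 0" and one: "S\<^sup>2 + C\<^sup>2 = 1"
    and hx: "hx = (h + C / S) * x" and hy: "hy = (h - S / C) * y"
    and eq: "(hy - ay / S\<^sup>2) * x + (h + C / S) * Z = (hx - ax / C\<^sup>2) * y + (h - S / C) * Z"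
  shows "Z = x * y + C / S * ay * x + - (S / C) * ax * y"
proof -
  have e2: "(C / S + S / C) * Z = (C / S + S / C) * (x * y) + ay * x / S\<^sup>2 - ax * y / C\<^sup>2"
    using eq unfolding hx hy by (simp add: algebra_simps)
  have k: "C / S + S / C = 1 / (S * C)"
    using nz one by (simp add: field_simps power2_eq_square add.commute)
  have "Z = (S * C) * ((C / S + S / C) * Z)" using k nz by simp
  also have "\<dots> = (S * C) * ((C / S + S / C) * (x * y) + ay * x / S\<^sup>2 - ax * y / C\<^sup>2)" using e2 by simp
  also have "\<dots> = x * y + (S * C) * (ay * x / S\<^sup>2 - ax * y / C\<^sup>2)" using k nz by (simp add: algebra_simps)
  also have "\<dots> = x * y + C / S * ay * x + - (S / C) * ax * y" using nz by (simp add: field_simps power2_eq_square)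
  finally show ?thesis .
qed

lemma solveT1:
  fixes T e C W N qn :: real
  assumes "T * (- 2 * e * C * W) = qn * (- C * N)" "e > 0" "C \<noteq> 0" "W \<noteq> 0"
  shows "T = qn * inverse e / 2 * (N / W)"
proof -
  have "T * (- 2 * e * C * W) = (qn * inverse e / 2 * (N / W)) * (- 2 * e * C * W)"
    using assms by (simp add: field_simps)
  moreover have "- 2 * e * C * W \<noteq> 0" using assms by simp
  ultimately show ?thesis using mult_right_cancel by blast
qed

lemma solveT2:
  fixes T e S W N qn :: real
  assumes "T * (2 * e * S * W) = qn * (S * N)" "e > 0" "S \<noteq> 0" "W \<noteq> 0"
  shows "T = qn * inverse e / 2 * (N / W)"
proof -
  have "T * (2 * e * S * W) = (qn * inverse e / 2 * (N / W)) * (2 * e * S * W)"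
    using assms by (simp add: field_simps)
  moreover have "2 * e * S * W \<noteq> 0" using assms by simp
  ultimately show ?thesis using mult_right_cancel by blast
qed

lemma alg_T1:
  fixes \<sigma> e S C h A2 Kc T1 qn :: real
  assumes nz: "\<sigma> * \<sigma> = 1" "e > 0" "C \<noteq> 0" "S - h * C \<noteq> 0" and one: "S\<^sup>2 + C\<^sup>2 = 1"
    and A2: "A2 = \<sigma> * (S - h * C)" and Kc: "Kc = - (\<sigma> * (e * C))"
    and k: "2 * (T1 * A2) * Kc - qn * A2\<^sup>2 = - qn"
  shows "T1 = qn * inverse e / 2 * ((2 * h * S + (1 - h\<^sup>2) * C) / (S - h * C))"
proof -
  have a0: "2 * (\<sigma> * (S - h * C)) * (- (\<sigma> * (e * C))) = - 2 * (\<sigma> * \<sigma>) * e * C * (S - h * C)"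
    by algebra
  have a: "2 * A2 * Kc = - 2 * e * C * (S - h * C)" unfolding A2 Kc a0 nz(1) by simp
  have b0: "(\<sigma> * (S - h * C))\<^sup>2 = (\<sigma> * \<sigma>) * (S - h * C)\<^sup>2" by algebra
  have b1: "(S - h * C)\<^sup>2 - (S\<^sup>2 + C\<^sup>2) = - C * (2 * h * S + (1 - h\<^sup>2) * C)" by algebra
  have b: "A2\<^sup>2 - 1 = - C * (2 * h * S + (1 - h\<^sup>2) * C)" unfolding A2 b0 nz(1) using b1 one by simp
  have "T1 * (2 * A2 * Kc) = qn * (A2\<^sup>2 - 1)" using k by algebra
  hence "T1 * (- 2 * e * C * (S - h * C)) = qn * (- C * (2 * h * S + (1 - h\<^sup>2) * C))" unfolding a b .
  thus ?thesis by (rule solveT1[OF _ nz(2-4)])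
qed

lemma alg_T2:
  fixes e S C h A1 Hc T2 qn :: real
  assumes nz: "e > 0" "S \<noteq> 0" "C + h * S \<noteq> 0" and one: "S\<^sup>2 + C\<^sup>2 = 1"
    and A1: "A1 = C + h * S" and Hc: "Hc = e * S"
    and k: "2 * (T2 * A1) * Hc - qn * A1\<^sup>2 = - qn"
  shows "T2 = qn * inverse e / 2 * ((2 * h * C - (1 - h\<^sup>2) * S) / (C + h * S))"
proof -
  have a: "2 * A1 * Hc = 2 * e * S * (C + h * S)" unfolding A1 Hc by algebra
  have b0: "(C + h * S)\<^sup>2 - (S\<^sup>2 + C\<^sup>2) = S * (2 * h * C - (1 - h\<^sup>2) * S)" by algebra
  have b: "A1\<^sup>2 - 1 = S * (2 * h * C - (1 - h\<^sup>2) * S)" unfolding A1 using b0 one by simp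
  have "T2 * (2 * A1 * Hc) = qn * (A1\<^sup>2 - 1)" using k by algebra
  hence "T2 * (2 * e * S * (C + h * S)) = qn * (S * (2 * h * C - (1 - h\<^sup>2) * S))" unfolding a b .
  thus ?thesis by (rule solveT2[OF _ nz])
qed

theorem mainTheorem2:
  fixes U :: "(real \<times> real) set"
    and r X Y :: "real \<times> real \<Rightarrow> real^3"
    and A1 A2 Hc Kc T1 T2 :: "real \<times> real \<Rightarrow> real"
    and qn :: real
  assumes U_open: "open U"
    and smooth: "smooth_on U r" "smooth_on U X" "smooth_on U Y" "smooth_on U A1" "smooth_on U A2"
    and T_diff: "T1 differentiable_on U" "T2 differentiable_on U"
    and A_nz: "\<forall>p\<in>U. A1 p \<noteq> 0 \<and> A2 p \<noteq> 0"
    and frame: "\<forall>p\<in>U. norm (X p) = 1 \<and> norm (Y p) = 1 \<and> X p \<bullet> Y p = 0"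
    and r_x: "\<forall>p\<in>U. dx r p = A1 p *\<^sub>R X p"
    and r_y: "\<forall>p\<in>U. dy r p = A2 p *\<^sub>R Y p"
    and N_x: "\<forall>p\<in>U. dx (\<lambda>q. cross3 (X q) (Y q)) p = Hc p *\<^sub>R X p"
    and N_y: "\<forall>p\<in>U. dy (\<lambda>q. cross3 (X q) (Y q)) p = Kc p *\<^sub>R Y p"
    and curv_nz: "\<forall>p\<in>U. Hc p \<noteq> 0 \<and> Kc p \<noteq> 0"
    and qn_nz: "qn \<noteq> 0"
    and eq1: "\<forall>p\<in>U. dx T1 p + (dx A1 p / A1 p) * (T1 p - T2 p) = 0"
    and eq2: "\<forall>p\<in>U. dy T2 p + (dy A2 p / A2 p) * (T2 p - T1 p) = 0"
    and eq3: "\<forall>p\<in>U. (- Hc p / A1 p) * T1 p + (- Kc p / A2 p) * T2 p + qn = 0"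
    and kind2_x: "\<forall>p\<in>U. 2 * (T2 p * A1 p) * Hc p - qn * (A1 p)\<^sup>2 = - qn"
    and kind2_y: "\<forall>p\<in>U. 2 * (T1 p * A2 p) * Kc p - qn * (A2 p)\<^sup>2 = - qn"
  shows "\<exists>h \<alpha> \<xi> :: real \<times> real \<Rightarrow> real.
           smooth_on U h \<and> smooth_on U \<alpha> \<and> smooth_on U \<xi> \<and>
           (\<forall>p\<in>U.
              \<comment> \<open>first fundamental form\<close>
              dx r p \<bullet> dx r p = (cos (\<alpha> p) + h p * sin (\<alpha> p))\<^sup>2 \<and>
              dx r p \<bullet> dy r p = 0 \<and>
              dy r p \<bullet> dy r p = (sin (\<alpha> p) - h p * cos (\<alpha> p))\<^sup>2 \<and>
              \<comment> \<open>third fundamental form\<close>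
              dx (\<lambda>q. cross3 (X q) (Y q)) p \<bullet> dx (\<lambda>q. cross3 (X q) (Y q)) p
                = exp (2 * \<xi> p) * (sin (\<alpha> p))\<^sup>2 \<and>
              dx (\<lambda>q. cross3 (X q) (Y q)) p \<bullet> dy (\<lambda>q. cross3 (X q) (Y q)) p = 0 \<and>
              dy (\<lambda>q. cross3 (X q) (Y q)) p \<bullet> dy (\<lambda>q. cross3 (X q) (Y q)) p
                = exp (2 * \<xi> p) * (cos (\<alpha> p))\<^sup>2 \<and>
              \<comment> \<open>the system for h, alpha, xi\<close>
              dx h p = (h p + cot (\<alpha> p)) * dx \<xi> p \<and>
              dy h p = (h p - tan (\<alpha> p)) * dy \<xi> p \<and>
              dy (dx \<xi>) p = dx \<xi> p * dy \<xi> p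
                 + (cot (\<alpha> p) * dy \<alpha> p) * dx \<xi> p
                 + (- tan (\<alpha> p) * dx \<alpha> p) * dy \<xi> p \<and>
              dx (\<lambda>q. - dx \<alpha> q + dx \<xi> q * cot (\<alpha> q)) p
                + dy (\<lambda>q. dy \<alpha> q + dy \<xi> q * tan (\<alpha> q)) p
                + exp (2 * \<xi> p) * sin (\<alpha> p) * cos (\<alpha> p) = 0 \<and>
              \<comment> \<open>stress resultants\<close>
              T1 p = qn * exp (- \<xi> p) / 2
                     * ((2 * h p * sin (\<alpha> p) + (1 - (h p)\<^sup>2) * cos (\<alpha> p))
                        / (sin (\<alpha> p) - h p * cos (\<alpha> p))) \<and>
              T2 p = qn * exp (- \<xi> p) / 2
                     * ((2 * h p * cos (\<alpha> p) - (1 - (h p)\<^sup>2) * sin (\<alpha> p))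
                        / (cos (\<alpha> p) + h p * sin (\<alpha> p))))"
proof -
  note geo = geometry[OF U_open smooth A_nz frame r_x r_y N_x N_y]
  have sHc: "smooth_on U Hc" and sKc: "smooth_on U Kc" using geo(1,2) .
  have cod1: "\<And>p. p \<in> U \<Longrightarrow> dy Hc p = dy A1 p / A2 p * Kc p" using geo(3) by blast
  have cod2: "\<And>p. p \<in> U \<Longrightarrow> dx Kc p = dx A2 p / A1 p * Hc p" using geo(4) by blast
  have gauss: "\<And>p. p \<in> U \<Longrightarrow> dy (\<lambda>q. dy A1 q / A2 q) p + dx (\<lambda>q. dx A2 q / A1 q) p + Hc p * Kc p = 0"
    using geo(5) by blast
  have U: "open U" by (rule U_open)
  define E where "E = (\<lambda>q. Hc q * Hc q + Kc q * Kc q)"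
  define \<xi> where "\<xi> = (\<lambda>q. ln (E q) / 2)"
  define \<sigma> where "\<sigma> = (\<lambda>q. (Hc q * A2 q - Kc q * A1 q) * exp (- \<xi> q))"
  define s where "s = (\<lambda>q. Hc q * exp (- \<xi> q))"
  define c where "c = (\<lambda>q. - \<sigma> q * Kc q * exp (- \<xi> q))"
  define \<alpha> where "\<alpha> = (\<lambda>q. 2 * arctan (s q / (1 + c q)))"
  define h where "h = (\<lambda>q. (A1 q - c q) / s q)"
  have pw: "A1 q = cos (\<alpha> q) + h q * sin (\<alpha> q) \<and>
            A2 q = \<sigma> q * (sin (\<alpha> q) - h q * cos (\<alpha> q)) \<and>
            Hc q = exp (\<xi> q) * sin (\<alpha> q) \<and>
            Kc q = - (\<sigma> q * (exp (\<xi> q) * cos (\<alpha> q))) \<and>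
            \<sigma> q * \<sigma> q = 1 \<and> sin (\<alpha> q) \<noteq> 0 \<and> cos (\<alpha> q) \<noteq> 0 \<and> 1 + c q > 0 \<and> E q > 0 \<and>
            (sin (\<alpha> q))\<^sup>2 + (cos (\<alpha> q))\<^sup>2 = 1 \<and> sin (\<alpha> q) = s q \<and> cos (\<alpha> q) = c q"
    if q: "q \<in> U" for q
  proof -
    have nz: "A1 q \<noteq> 0" "A2 q \<noteq> 0" "Hc q \<noteq> 0" "Kc q \<noteq> 0" using A_nz curv_nz q by auto
    have Epos: "E q > 0" unfolding E_def using nz(3) not_real_square_gt_zero[of "Hc q"] zero_le_square[of "Kc q"] by linarith
    define ee where "ee = exp (\<xi> q)"
    have eepos: "ee > 0" by (simp add: ee_def)
    have ee2: "ee * ee = E q"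
    proof -
      have "ee * ee = exp (\<xi> q + \<xi> q)" unfolding ee_def by (rule exp_add[symmetric])
      also have "\<xi> q + \<xi> q = ln (E q)" by (simp add: \<xi>_def)
      finally show ?thesis using Epos by simp
    qed
    have em: "exp (- \<xi> q) = 1 / ee" by (simp add: ee_def exp_minus inverse_eq_divide)
    have ksq: "(Hc q * A2 q - Kc q * A1 q)\<^sup>2 = Hc q * Hc q + Kc q * Kc q"
      by (rule key_sq[OF nz(1,2) qn_nz]) (use eq3 kind2_x kind2_y q in auto)
    have s2: "\<sigma> q * \<sigma> q = 1"
    proof -
      have "\<sigma> q * \<sigma> q = (Hc q * A2 q - Kc q * A1 q)\<^sup>2 / (ee * ee)"
        by (simp add: \<sigma>_def em power2_eq_square)
      thus ?thesis using ksq ee2 Epos nz unfolding E_def by simp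
    qed
    have sq: "s q = Hc q / ee" "c q = - \<sigma> q * Kc q / ee" by (simp_all add: s_def c_def em)
    have sc1: "(s q)\<^sup>2 + (c q)\<^sup>2 = 1"
    proof -
      have "(s q)\<^sup>2 + (c q)\<^sup>2 = (Hc q * Hc q + (\<sigma> q * \<sigma> q) * (Kc q * Kc q)) / (ee * ee)"
        unfolding sq by (simp add: power2_eq_square add_divide_distrib algebra_simps)
      thus ?thesis using s2 ee2 Epos nz unfolding E_def by simp
    qed
    have snz: "s q \<noteq> 0" using nz eepos sq by simp
    have cnz: "c q \<noteq> 0" using nz eepos sq s2 by auto
    have c1: "1 + c q > 0"
    proof -
      have "(c q)\<^sup>2 < 1" using sc1 snz by (smt (verit) power2_less_eq_zero_iff)
      hence "\<bar>c q\<bar> < 1" by (simp add: abs_square_less_1)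
      thus ?thesis by linarith
    qed
    have sa: "sin (\<alpha> q) = s q" "cos (\<alpha> q) = c q"
      unfolding \<alpha>_def using half_angle[OF sc1 c1] by auto
    have F1: "A1 q = cos (\<alpha> q) + h q * sin (\<alpha> q)" using snz unfolding sa h_def by simp
    have F2: "A2 q = \<sigma> q * (sin (\<alpha> q) - h q * cos (\<alpha> q))"
    proof -
      have "\<sigma> q * (s q - h q * c q) * s q = \<sigma> q * ((s q)\<^sup>2 + (c q)\<^sup>2 - A1 q * c q)"
        using snz unfolding h_def by (simp add: field_simps power2_eq_square)
      also have "\<dots> = \<sigma> q * (1 - A1 q * c q)" using sc1 by simp
      also have "\<dots> = \<sigma> q + (\<sigma> q * \<sigma> q) * A1 q * Kc q / ee" unfolding sq by (simp add: field_simps)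
      also have "\<dots> = \<sigma> q + A1 q * Kc q / ee" using s2 by simp
      also have "\<dots> = A2 q * s q" unfolding sq \<sigma>_def em using eepos by (simp add: field_simps)
      finally show ?thesis using snz unfolding sa by simp
    qed
    have F3: "Hc q = exp (\<xi> q) * sin (\<alpha> q)" unfolding sa sq ee_def[symmetric] using eepos by simp
    have F4: "Kc q = - (\<sigma> q * (exp (\<xi> q) * cos (\<alpha> q)))"
    proof -
      have "- (\<sigma> q * (ee * c q)) = (\<sigma> q * \<sigma> q) * Kc q" unfolding sq using eepos by simp
      thus ?thesis using s2 unfolding sa ee_def by simp
    qed
    show ?thesis using F1 F2 F3 F4 s2 snz cnz c1 Epos sc1 sa unfolding sa by simp
  qed

  have Epos: "\<And>q. q \<in> U \<Longrightarrow> E q > 0" using pw by blast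
  have c1pos: "\<And>q. q \<in> U \<Longrightarrow> 1 + c q \<noteq> 0" using pw by force
  have snz: "\<And>q. q \<in> U \<Longrightarrow> s q \<noteq> 0" using pw by force
  have sE: "smooth_on U E" unfolding E_def by (intro smooth_add smooth_mult U sHc sKc)
  have sxi: "smooth_on U \<xi>" unfolding \<xi>_def
    by (rule smooth_divide[OF U _ smooth_ln[OF U Epos sE] smooth_const]) simp
  have sem: "smooth_on U (\<lambda>q. exp (- \<xi> q))" by (intro smooth_exp smooth_minus U sxi)
  have ssig: "smooth_on U \<sigma>" unfolding \<sigma>_def
    by (intro smooth_mult smooth_diffr U sem) (intro smooth_mult U sHc sKc smooth(4) smooth(5))+
  have ss: "smooth_on U s" unfolding s_def by (intro smooth_mult U sHc sem)
  have sc: "smooth_on U c" unfolding c_def by (intro smooth_mult smooth_minus U ssig sKc sem)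
  have salpha: "smooth_on U \<alpha>" unfolding \<alpha>_def
    by (intro smooth_mult smooth_const smooth_arctan smooth_divide smooth_add U ss sc c1pos)
  have sh: "smooth_on U h" unfolding h_def
    by (intro smooth_divide smooth_diffr U smooth(4) sc ss snz)
  have da: "\<alpha> differentiable_on U" and dh: "h differentiable_on U" and dxi: "\<xi> differentiable_on U"
    and dsig: "\<sigma> differentiable_on U"
    using smooth_diff salpha sh sxi ssig by blast+
  have ddxi: "dx \<xi> differentiable_on U" "dy \<xi> differentiable_on U"
    using smooth_diff smooth_dx smooth_dy sxi by blast+
  have dsig0: "dx \<sigma> p = 0" "dy \<sigma> p = 0" if p: "p \<in> U" for p
  proof -
    have s2: "\<sigma> p * \<sigma> p = 1" using pw[OF p] by blast
    have "dx (\<lambda>q. \<sigma> q * \<sigma> q) p = 0" by (rule dx_locconst[OF U p]) (use pw in blast)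
    hence "\<sigma> p * dx \<sigma> p + dx \<sigma> p * \<sigma> p = 0" using dx_bb[OF bounded_bilinear_mult U p dsig dsig] by simp
    hence "2 * \<sigma> p * dx \<sigma> p = 0" by simp
    thus "dx \<sigma> p = 0" using s2 by auto
    have "dy (\<lambda>q. \<sigma> q * \<sigma> q) p = 0" by (rule dy_locconst[OF U p]) (use pw in blast)
    hence "\<sigma> p * dy \<sigma> p + dy \<sigma> p * \<sigma> p = 0" using dy_bb[OF bounded_bilinear_mult U p dsig dsig] by simp
    hence "2 * \<sigma> p * dy \<sigma> p = 0" by simp
    thus "dy \<sigma> p = 0" using s2 by auto
  qed
  have DA2x: "dx A2 p = \<sigma> p * (cos (\<alpha> p) * dx \<alpha> p - (dx h p * cos (\<alpha> p) - h p * sin (\<alpha> p) * dx \<alpha> p))"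
    if p: "p \<in> U" for p
  proof -
    have "dx A2 p = dx (\<lambda>q. \<sigma> q * (sin (\<alpha> q) - h q * cos (\<alpha> q))) p"
      by (rule dx_cong[OF U p]) (use pw in blast)
    also have "\<dots> = \<sigma> p * (cos (\<alpha> p) * dx \<alpha> p - (dx h p * cos (\<alpha> p) - h p * sin (\<alpha> p) * dx \<alpha> p))"
      by (rule dx_eq_real)
        (auto intro!: derivative_eq_intros dx_real[OF U p da] dx_real[OF U p dh] dx_real[OF U p dsig]
          simp: dsig0[OF p] algebra_simps)
    finally show ?thesis .
  qed
  have DKcx: "dx Kc p = - (\<sigma> p * (exp (\<xi> p) * dx \<xi> p * cos (\<alpha> p) - exp (\<xi> p) * sin (\<alpha> p) * dx \<alpha> p))"
    if p: "p \<in> U" for p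
  proof -
    have "dx Kc p = dx (\<lambda>q. - (\<sigma> q * (exp (\<xi> q) * cos (\<alpha> q)))) p"
      by (rule dx_cong[OF U p]) (use pw in blast)
    also have "\<dots> = - (\<sigma> p * (exp (\<xi> p) * dx \<xi> p * cos (\<alpha> p) - exp (\<xi> p) * sin (\<alpha> p) * dx \<alpha> p))"
      by (rule dx_eq_real)
        (auto intro!: derivative_eq_intros dx_real[OF U p da] dx_real[OF U p dxi] dx_real[OF U p dsig]
          simp: dsig0[OF p] algebra_simps)
    finally show ?thesis .
  qed
  have DA1y: "dy A1 p = - sin (\<alpha> p) * dy \<alpha> p + dy h p * sin (\<alpha> p) + h p * cos (\<alpha> p) * dy \<alpha> p"
    if p: "p \<in> U" for p
  proof -
    have "dy A1 p = dy (\<lambda>q. cos (\<alpha> q) + h q * sin (\<alpha> q)) p"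
      by (rule dy_cong[OF U p]) (use pw in blast)
    also have "\<dots> = - sin (\<alpha> p) * dy \<alpha> p + dy h p * sin (\<alpha> p) + h p * cos (\<alpha> p) * dy \<alpha> p"
      by (rule dy_eq_real)
        (auto intro!: derivative_eq_intros dy_real[OF U p da] dy_real[OF U p dh] simp: algebra_simps)
    finally show ?thesis .
  qed
  have DHcy: "dy Hc p = exp (\<xi> p) * dy \<xi> p * sin (\<alpha> p) + exp (\<xi> p) * cos (\<alpha> p) * dy \<alpha> p"
    if p: "p \<in> U" for p
  proof -
    have "dy Hc p = dy (\<lambda>q. exp (\<xi> q) * sin (\<alpha> q)) p"
      by (rule dy_cong[OF U p]) (use pw in blast)
    also have "\<dots> = exp (\<xi> p) * dy \<xi> p * sin (\<alpha> p) + exp (\<xi> p) * cos (\<alpha> p) * dy \<alpha> p"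
      by (rule dy_eq_real)
        (auto intro!: derivative_eq_intros dy_real[OF U p da] dy_real[OF U p dxi] simp: algebra_simps)
    finally show ?thesis .
  qed

  have pA1: "\<And>q. q \<in> U \<Longrightarrow> A1 q = cos (\<alpha> q) + h q * sin (\<alpha> q)" using pw by blast
  have pA2: "\<And>q. q \<in> U \<Longrightarrow> A2 q = \<sigma> q * (sin (\<alpha> q) - h q * cos (\<alpha> q))" using pw by blast
  have pHc: "\<And>q. q \<in> U \<Longrightarrow> Hc q = exp (\<xi> q) * sin (\<alpha> q)" using pw by blast
  have pKc: "\<And>q. q \<in> U \<Longrightarrow> Kc q = - (\<sigma> q * (exp (\<xi> q) * cos (\<alpha> q)))" using pw by blast
  have psig: "\<And>q. q \<in> U \<Longrightarrow> \<sigma> q * \<sigma> q = 1" using pw by blast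
  have psin: "\<And>q. q \<in> U \<Longrightarrow> sin (\<alpha> q) \<noteq> 0" using pw by blast
  have pcos: "\<And>q. q \<in> U \<Longrightarrow> cos (\<alpha> q) \<noteq> 0" using pw by blast
  have pone: "\<And>q. q \<in> U \<Longrightarrow> (sin (\<alpha> q))\<^sup>2 + (cos (\<alpha> q))\<^sup>2 = 1" using pw by blast
  have signz: "\<And>q. q \<in> U \<Longrightarrow> \<sigma> q \<noteq> 0" using psig by force
  have A1nz: "\<And>q. q \<in> U \<Longrightarrow> A1 q \<noteq> 0" and A2nz: "\<And>q. q \<in> U \<Longrightarrow> A2 q \<noteq> 0" using A_nz by auto
  have H1: "dx h q = (h q + cot (\<alpha> q)) * dx \<xi> q" if q: "q \<in> U" for q
  proof -
    have e: "- (\<sigma> q * (exp (\<xi> q) * dx \<xi> q * cos (\<alpha> q) - exp (\<xi> q) * sin (\<alpha> q) * dx \<alpha> q)) =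
      \<sigma> q * (cos (\<alpha> q) * dx \<alpha> q - (dx h q * cos (\<alpha> q) - h q * sin (\<alpha> q) * dx \<alpha> q)) / (cos (\<alpha> q) + h q * sin (\<alpha> q)) * (exp (\<xi> q) * sin (\<alpha> q))"
      using cod2[OF q] unfolding DKcx[OF q] DA2x[OF q] pA1[OF q] pHc[OF q] .
    have "A1 q \<noteq> 0" by (rule A1nz[OF q])
    hence nz: "cos (\<alpha> q) + h q * sin (\<alpha> q) \<noteq> 0" using pA1[OF q] by simp
    show ?thesis using alg_H1[OF signz[OF q] _ pcos[OF q] psin[OF q] nz e] by (simp add: cot_def)
  qed
  have H2: "dy h q = (h q - tan (\<alpha> q)) * dy \<xi> q" if q: "q \<in> U" for q
  proof -
    have e: "exp (\<xi> q) * dy \<xi> q * sin (\<alpha> q) + exp (\<xi> q) * cos (\<alpha> q) * dy \<alpha> q =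
      (- sin (\<alpha> q) * dy \<alpha> q + dy h q * sin (\<alpha> q) + h q * cos (\<alpha> q) * dy \<alpha> q) / (\<sigma> q * (sin (\<alpha> q) - h q * cos (\<alpha> q))) * (- (\<sigma> q * (exp (\<xi> q) * cos (\<alpha> q))))"
      using cod1[OF q] unfolding DHcy[OF q] DA1y[OF q] pA2[OF q] pKc[OF q] .
    have "A2 q \<noteq> 0" by (rule A2nz[OF q])
    hence nz: "sin (\<alpha> q) - h q * cos (\<alpha> q) \<noteq> 0" using pA2[OF q] by simp
    show ?thesis using alg_H2[OF signz[OF q] _ pcos[OF q] psin[OF q] nz e] by (simp add: tan_def)
  qed
  define Qf where "Qf = (\<lambda>q. dx A2 q / A1 q)"
  define Pf where "Pf = (\<lambda>q. dy A1 q / A2 q)"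
  have dQf: "Qf differentiable_on U" unfolding Qf_def
    by (intro smooth_diff smooth_divide U A1nz smooth_dx smooth(4,5))
  have dPf: "Pf differentiable_on U" unfolding Pf_def
    by (intro smooth_diff smooth_divide U A2nz smooth_dy smooth(4,5))
  have B1: "- dx \<alpha> q + dx \<xi> q * cot (\<alpha> q) = - \<sigma> q * Qf q" if q: "q \<in> U" for q
  proof -
    have e: "- (\<sigma> q * (exp (\<xi> q) * dx \<xi> q * cos (\<alpha> q) - exp (\<xi> q) * sin (\<alpha> q) * dx \<alpha> q)) =
      Qf q * (exp (\<xi> q) * sin (\<alpha> q))"
      using cod2[OF q] unfolding DKcx[OF q] pHc[OF q] Qf_def .
    show ?thesis using alg_B1[OF psig[OF q] _ psin[OF q] e] by (simp add: cot_def)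
  qed
  have B2: "dy \<alpha> q + dy \<xi> q * tan (\<alpha> q) = - \<sigma> q * Pf q" if q: "q \<in> U" for q
  proof -
    have e: "exp (\<xi> q) * dy \<xi> q * sin (\<alpha> q) + exp (\<xi> q) * cos (\<alpha> q) * dy \<alpha> q =
      Pf q * (- (\<sigma> q * (exp (\<xi> q) * cos (\<alpha> q))))"
      using cod1[OF q] unfolding DHcy[OF q] pKc[OF q] Pf_def .
    show ?thesis using alg_B2[OF _ pcos[OF q] e] by (simp add: tan_def)
  qed

  have XI: "dy (dx \<xi>) p = dx \<xi> p * dy \<xi> p + (cot (\<alpha> p) * dy \<alpha> p) * dx \<xi> p + (- tan (\<alpha> p) * dx \<alpha> p) * dy \<xi> p"
    if p: "p \<in> U" for p
  proof -
    have c0: "DERIV cot (\<alpha> (fst p, snd p)) :> - inverse ((sin (\<alpha> p))\<^sup>2)" using DERIV_cot[of "\<alpha> p"] psin[OF p] by simp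
    have t0: "DERIV tan (\<alpha> (fst p, snd p)) :> inverse ((cos (\<alpha> p))\<^sup>2)" using DERIV_tan[of "\<alpha> p"] pcos[OF p] by simp
    have dcot: "((\<lambda>t. cot (\<alpha> (fst p, t))) has_real_derivative - inverse ((sin (\<alpha> p))\<^sup>2) * dy \<alpha> p) (at (snd p))"
      by (rule DERIV_chain2[OF c0 dy_real[OF U p da]])
    have dtan: "((\<lambda>t. tan (\<alpha> (t, snd p))) has_real_derivative inverse ((cos (\<alpha> p))\<^sup>2) * dx \<alpha> p) (at (fst p))"
      by (rule DERIV_chain2[OF t0 dx_real[OF U p da]])
    have "dy (dx h) p = dy (\<lambda>q. (h q + cot (\<alpha> q)) * dx \<xi> q) p"
      by (rule dy_cong[OF U p]) (rule H1)
    also have "\<dots> = (dy h p + - inverse ((sin (\<alpha> p))\<^sup>2) * dy \<alpha> p) * dx \<xi> p + (h p + cot (\<alpha> p)) * dy (dx \<xi>) p"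
      by (rule dy_eq_real) (auto intro!: derivative_eq_intros dcot dy_real[OF U p dh] dy_real[OF U p ddxi(1)] dy_real[OF U p da] simp: psin[OF p])
    finally have 1: "dy (dx h) p = (dy h p + - inverse ((sin (\<alpha> p))\<^sup>2) * dy \<alpha> p) * dx \<xi> p + (h p + cot (\<alpha> p)) * dy (dx \<xi>) p" .
    have "dx (dy h) p = dx (\<lambda>q. (h q - tan (\<alpha> q)) * dy \<xi> q) p"
      by (rule dx_cong[OF U p]) (rule H2)
    also have "\<dots> = (dx h p - inverse ((cos (\<alpha> p))\<^sup>2) * dx \<alpha> p) * dy \<xi> p + (h p - tan (\<alpha> p)) * dx (dy \<xi>) p"
      by (rule dx_eq_real) (auto intro!: derivative_eq_intros dtan dx_real[OF U p dh] dx_real[OF U p ddxi(2)] dx_real[OF U p da] simp: pcos[OF p])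
    finally have 2: "dx (dy h) p = (dx h p - inverse ((cos (\<alpha> p))\<^sup>2) * dx \<alpha> p) * dy \<xi> p + (h p - tan (\<alpha> p)) * dx (dy \<xi>) p" .
    have sch: "dy (dx h) p = dx (dy h) p" "dy (dx \<xi>) p = dx (dy \<xi>) p"
      using schwarz_real[OF U p sh] schwarz_real[OF U p sxi] by auto
    have eq: "(dy h p - dy \<alpha> p / (sin (\<alpha> p))\<^sup>2) * dx \<xi> p + (h p + cos (\<alpha> p) / sin (\<alpha> p)) * dy (dx \<xi>) p =
        (dx h p - dx \<alpha> p / (cos (\<alpha> p))\<^sup>2) * dy \<xi> p + (h p - sin (\<alpha> p) / cos (\<alpha> p)) * dy (dx \<xi>) p"
      using 1 2 sch by (simp add: cot_def tan_def divide_inverse mult.commute)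
    have hx: "dx h p = (h p + cos (\<alpha> p) / sin (\<alpha> p)) * dx \<xi> p" using H1[OF p] by (simp add: cot_def)
    have hy: "dy h p = (h p - sin (\<alpha> p) / cos (\<alpha> p)) * dy \<xi> p" using H2[OF p] by (simp add: tan_def)
    show ?thesis using alg_xi[OF psin[OF p] pcos[OF p] pone[OF p] hx hy eq] by (simp add: cot_def tan_def)
  qed
  have FOURTH: "dx (\<lambda>q. - dx \<alpha> q + dx \<xi> q * cot (\<alpha> q)) p
                + dy (\<lambda>q. dy \<alpha> q + dy \<xi> q * tan (\<alpha> q)) p
                + exp (2 * \<xi> p) * sin (\<alpha> p) * cos (\<alpha> p) = 0"
    if p: "p \<in> U" for p
  proof -
    have "dx (\<lambda>q. - dx \<alpha> q + dx \<xi> q * cot (\<alpha> q)) p = dx (\<lambda>q. - \<sigma> q * Qf q) p"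
      by (rule dx_cong[OF U p]) (rule B1)
    also have "\<dots> = - \<sigma> p * dx Qf p"
      by (rule dx_eq_real) (auto intro!: derivative_eq_intros dx_real[OF U p dsig] dx_real[OF U p dQf] simp: dsig0[OF p])
    finally have 1: "dx (\<lambda>q. - dx \<alpha> q + dx \<xi> q * cot (\<alpha> q)) p = - \<sigma> p * dx Qf p" .
    have "dy (\<lambda>q. dy \<alpha> q + dy \<xi> q * tan (\<alpha> q)) p = dy (\<lambda>q. - \<sigma> q * Pf q) p"
      by (rule dy_cong[OF U p]) (rule B2)
    also have "\<dots> = - \<sigma> p * dy Pf p"
      by (rule dy_eq_real) (auto intro!: derivative_eq_intros dy_real[OF U p dsig] dy_real[OF U p dPf] simp: dsig0[OF p])
    finally have 2: "dy (\<lambda>q. dy \<alpha> q + dy \<xi> q * tan (\<alpha> q)) p = - \<sigma> p * dy Pf p" .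
    have g: "dy Pf p + dx Qf p + Hc p * Kc p = 0" using gauss[OF p] unfolding Pf_def Qf_def .
    have e2: "exp (2 * \<xi> p) = exp (\<xi> p) * exp (\<xi> p)" by (simp add: exp_add[symmetric])
    have s2: "\<sigma> p * \<sigma> p = 1" by (rule psig[OF p])
    have hk: "Hc p = exp (\<xi> p) * sin (\<alpha> p)" "Kc p = - (\<sigma> p * (exp (\<xi> p) * cos (\<alpha> p)))"
      using pHc[OF p] pKc[OF p] by auto
    show ?thesis unfolding 1 2 e2 using g s2 hk by algebra
  qed
  have MAIN: "dx r p \<bullet> dx r p = (cos (\<alpha> p) + h p * sin (\<alpha> p))\<^sup>2 \<and>
              dx r p \<bullet> dy r p = 0 \<and>
              dy r p \<bullet> dy r p = (sin (\<alpha> p) - h p * cos (\<alpha> p))\<^sup>2 \<and>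
              dx (\<lambda>q. cross3 (X q) (Y q)) p \<bullet> dx (\<lambda>q. cross3 (X q) (Y q)) p
                = exp (2 * \<xi> p) * (sin (\<alpha> p))\<^sup>2 \<and>
              dx (\<lambda>q. cross3 (X q) (Y q)) p \<bullet> dy (\<lambda>q. cross3 (X q) (Y q)) p = 0 \<and>
              dy (\<lambda>q. cross3 (X q) (Y q)) p \<bullet> dy (\<lambda>q. cross3 (X q) (Y q)) p
                = exp (2 * \<xi> p) * (cos (\<alpha> p))\<^sup>2 \<and>
              T1 p = qn * exp (- \<xi> p) / 2
                     * ((2 * h p * sin (\<alpha> p) + (1 - (h p)\<^sup>2) * cos (\<alpha> p))
                        / (sin (\<alpha> p) - h p * cos (\<alpha> p))) \<and>
              T2 p = qn * exp (- \<xi> p) / 2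
                     * ((2 * h p * cos (\<alpha> p) - (1 - (h p)\<^sup>2) * sin (\<alpha> p))
                        / (cos (\<alpha> p) + h p * sin (\<alpha> p)))"
    if p: "p \<in> U" for p
  proof -
    have fr: "X p \<bullet> X p = 1" "Y p \<bullet> Y p = 1" "X p \<bullet> Y p = 0" using frame p by (auto simp: dot_square_norm)
    have e2: "exp (2 * \<xi> p) = exp (\<xi> p) * exp (\<xi> p)" by (simp add: exp_add[symmetric])
    have s2: "\<sigma> p * \<sigma> p = 1" by (rule psig[OF p])
    have I1: "dx r p \<bullet> dx r p = (A1 p)\<^sup>2" using r_x p fr by (simp add: power2_eq_square)
    have I2: "dx r p \<bullet> dy r p = 0" using r_x r_y p fr by simp
    have I3: "dy r p \<bullet> dy r p = (A2 p)\<^sup>2" using r_y p fr by (simp add: power2_eq_square)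
    have III1: "dx (\<lambda>q. cross3 (X q) (Y q)) p \<bullet> dx (\<lambda>q. cross3 (X q) (Y q)) p = (Hc p)\<^sup>2"
      using N_x p fr by (simp add: power2_eq_square)
    have III2: "dx (\<lambda>q. cross3 (X q) (Y q)) p \<bullet> dy (\<lambda>q. cross3 (X q) (Y q)) p = 0"
      using N_x N_y p fr by simp
    have III3: "dy (\<lambda>q. cross3 (X q) (Y q)) p \<bullet> dy (\<lambda>q. cross3 (X q) (Y q)) p = (Kc p)\<^sup>2"
      using N_y p fr by (simp add: power2_eq_square)
    have a2: "(A2 p)\<^sup>2 = (sin (\<alpha> p) - h p * cos (\<alpha> p))\<^sup>2"
    proof -
      have "(A2 p)\<^sup>2 = (\<sigma> p * \<sigma> p) * (sin (\<alpha> p) - h p * cos (\<alpha> p))\<^sup>2" unfolding pA2[OF p] by algebra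
      thus ?thesis using s2 by simp
    qed
    have hc2: "(Hc p)\<^sup>2 = exp (2 * \<xi> p) * (sin (\<alpha> p))\<^sup>2" unfolding pHc[OF p] e2 by algebra
    have kc2: "(Kc p)\<^sup>2 = exp (2 * \<xi> p) * (cos (\<alpha> p))\<^sup>2"
    proof -
      have "(Kc p)\<^sup>2 = (\<sigma> p * \<sigma> p) * (exp (\<xi> p) * exp (\<xi> p)) * (cos (\<alpha> p))\<^sup>2" unfolding pKc[OF p] by algebra
      thus ?thesis using s2 e2 by simp
    qed
    have A2nz': "sin (\<alpha> p) - h p * cos (\<alpha> p) \<noteq> 0" using A2nz[OF p] pA2[OF p] by auto
    have A1nz': "cos (\<alpha> p) + h p * sin (\<alpha> p) \<noteq> 0" using A1nz[OF p] pA1[OF p] by auto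
    have k2: "2 * (T1 p * A2 p) * Kc p - qn * (A2 p)\<^sup>2 = - qn" using kind2_y p by blast
    have k1: "2 * (T2 p * A1 p) * Hc p - qn * (A1 p)\<^sup>2 = - qn" using kind2_x p by blast
    have T1e: "T1 p = qn * inverse (exp (\<xi> p)) / 2 * ((2 * h p * sin (\<alpha> p) + (1 - (h p)\<^sup>2) * cos (\<alpha> p)) / (sin (\<alpha> p) - h p * cos (\<alpha> p)))"
      by (rule alg_T1[OF s2 exp_gt_zero pcos[OF p] A2nz' pone[OF p] pA2[OF p] pKc[OF p] k2])
    have T2e: "T2 p = qn * inverse (exp (\<xi> p)) / 2 * ((2 * h p * cos (\<alpha> p) - (1 - (h p)\<^sup>2) * sin (\<alpha> p)) / (cos (\<alpha> p) + h p * sin (\<alpha> p)))"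
      by (rule alg_T2[OF exp_gt_zero psin[OF p] A1nz' pone[OF p] pA1[OF p] pHc[OF p] k1])
    show ?thesis using I1 I2 I3 III1 III2 III3 a2 hc2 kc2 T1e T2e pA1[OF p]
      by (simp add: exp_minus)
  qed
  show ?thesis
    by (rule exI[of _ h], rule exI[of _ \<alpha>], rule exI[of _ \<xi>])
      (use sh salpha sxi MAIN H1 H2 XI FOURTH in blast)
qed

end
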